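(* Let $G$ be a finite group with irreducible complex characters $\psi_1,\dots,\psi_k$ of dimensions $n_i=\psi_i(1)$. Consider the problem of minimizing, over $(\alpha_1,\dots,\alpha_k)\in\mathbb{R}^k$, the quantity $$\Big\|\sum_{i=1}^k\frac{\alpha_i}{n_i^2}\mathrm{Re}(\psi_i)\Big\|_1$$ subject to the constraints $\sum_{i=1}^k\alpha_in_i=|G|$, $\alpha_i\ge0$ for $i=1,\dots,k$, and $\sum_{i=1}^k\alpha_i\mathrm{Re}(\psi_i(g))\ge0$ for all $g\in G$. Then $(\alpha_1,\dots,\alpha_k)=(n_1,\dots,n_k)$, i.e. the regular character $n_1\psi_1+\cdots+n_k\psi_k$, is a solution of this constrained minimization problem.
   Context: For a complex-valued function $f$ on $G$, its $L_1$ norm is $\|f\|_1=\sum_{g\in G}|\mathrm{Re}(f(g))|$. *)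

theory Defs
  imports "HOL-Algebra.Group" "Jordan_Normal_Form.Matrix"
begin

definition is_rep :: "('a, 'b) monoid_scheme \<Rightarrow> nat \<Rightarrow> ('a \<Rightarrow> complex mat) \<Rightarrow> bool" where
  "is_rep G d \<rho> \<longleftrightarrow>
     (\<forall>g \<in> carrier G. \<rho> g \<in> carrier_mat d d) \<and>
     \<rho> \<one>\<^bsub>G\<^esub> = 1\<^sub>m d \<and>
     (\<forall>g \<in> carrier G. \<forall>h \<in> carrier G. \<rho> (g \<otimes>\<^bsub>G\<^esub> h) = \<rho> g * \<rho> h)"

definition is_subspace :: "nat \<Rightarrow> complex vec set \<Rightarrow> bool" where
  "is_subspace d W \<longleftrightarrow> W \<subseteq> carrier_vec d \<and> 0\<^sub>v d \<in> W \<and>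
     (\<forall>v\<in>W. \<forall>w\<in>W. v + w \<in> W) \<and> (\<forall>c. \<forall>v\<in>W. c \<cdot>\<^sub>v v \<in> W)"

definition is_irred_rep :: "('a, 'b) monoid_scheme \<Rightarrow> nat \<Rightarrow> ('a \<Rightarrow> complex mat) \<Rightarrow> bool" where
  "is_irred_rep G d \<rho> \<longleftrightarrow> is_rep G d \<rho> \<and> d > 0 \<and>
     (\<forall>W. is_subspace d W \<and> (\<forall>g\<in>carrier G. \<forall>w\<in>W. \<rho> g *\<^sub>v w \<in> W)
          \<longrightarrow> W = {0\<^sub>v d} \<or> W = carrier_vec d)"

definition mat_trace :: "complex mat \<Rightarrow> complex" where
  "mat_trace A = (\<Sum>i<dim_row A. A $$ (i,i))"

text \<open>Character of a representation (set to 0 outside the carrier, for uniqueness).\<close>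
definition character :: "('a, 'b) monoid_scheme \<Rightarrow> ('a \<Rightarrow> complex mat) \<Rightarrow> 'a \<Rightarrow> complex" where
  "character G \<rho> = (\<lambda>g. if g \<in> carrier G then mat_trace (\<rho> g) else 0)"

definition irr_chars :: "('a, 'b) monoid_scheme \<Rightarrow> ('a \<Rightarrow> complex) set" where
  "irr_chars G = {\<chi>. \<exists>d \<rho>. is_irred_rep G d \<rho> \<and> \<chi> = character G \<rho>}"

definition L1_norm :: "('a, 'b) monoid_scheme \<Rightarrow> ('a \<Rightarrow> complex) \<Rightarrow> real" where
  "L1_norm G f = (\<Sum>g\<in>carrier G. \<bar>Re (f g)\<bar>)"

definition chdeg :: "('a, 'b) monoid_scheme \<Rightarrow> ('a \<Rightarrow> complex) \<Rightarrow> real" where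
  "chdeg G \<psi> = Re (\<psi> \<one>\<^bsub>G\<^esub>)"

definition objective :: "('a, 'b) monoid_scheme \<Rightarrow> (('a \<Rightarrow> complex) \<Rightarrow> real) \<Rightarrow> real" where
  "objective G \<alpha> = L1_norm G (\<lambda>g. complex_of_real
      (\<Sum>\<psi>\<in>irr_chars G. \<alpha> \<psi> / (chdeg G \<psi>)^2 * Re (\<psi> g)))"

definition feasible :: "('a, 'b) monoid_scheme \<Rightarrow> (('a \<Rightarrow> complex) \<Rightarrow> real) \<Rightarrow> bool" where
  "feasible G \<alpha> \<longleftrightarrow>
     (\<Sum>\<psi>\<in>irr_chars G. \<alpha> \<psi> * chdeg G \<psi>) = real (card (carrier G)) \<and>
     (\<forall>\<psi>\<in>irr_chars G. \<alpha> \<psi> \<ge> 0) \<and>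
     (\<forall>g\<in>carrier G. (\<Sum>\<psi>\<in>irr_chars G. \<alpha> \<psi> * Re (\<psi> g)) \<ge> 0)"

end

theory Submission
  imports Defs "Jordan_Normal_Form.Spectral_Radius"
begin


lemma mv_idx: "A \<in> carrier_mat n m \<Longrightarrow> v \<in> carrier_vec m \<Longrightarrow> i < n \<Longrightarrow>
   (A *\<^sub>v v) $ i = (\<Sum>k<m. A $$ (i,k) * v $ k)"
  by (simp add: mult_mat_vec_def scalar_prod_def atLeast0LessThan)

lemma mm_idx: "A \<in> carrier_mat n m \<Longrightarrow> B \<in> carrier_mat m p \<Longrightarrow> i < n \<Longrightarrow> j < p \<Longrightarrow>
   (A * B) $$ (i,j) = (\<Sum>k<m. A $$ (i,k) * B $$ (k,j))"
  by (simp add: scalar_prod_def atLeast0LessThan)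

lemma mat_trace_def2: "A \<in> carrier_mat n n \<Longrightarrow> mat_trace A = (\<Sum>i<n. A $$ (i,i))"
  by (simp add: mat_trace_def)

lemma mat_trace_comm:
  assumes A: "A \<in> carrier_mat n m" and B: "B \<in> carrier_mat m n"
  shows "mat_trace (A * B) = mat_trace (B * A)"
proof -
  have "mat_trace (A * B) = (\<Sum>i<n. \<Sum>k<m. A $$ (i,k) * B $$ (k,i))"
    using A B by (simp add: mat_trace_def index_mult_mat scalar_prod_def row_def col_def atLeast0LessThan)
  also have "\<dots> = (\<Sum>k<m. \<Sum>i<n. B $$ (k,i) * A $$ (i,k))"
    by (subst sum.swap) (simp add: mult.commute)
  also have "\<dots> = mat_trace (B * A)"
    using A B by (simp add: mat_trace_def index_mult_mat scalar_prod_def row_def col_def atLeast0LessThan)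
  finally show ?thesis .
qed

lemma mat_trace_one[simp]: "mat_trace (1\<^sub>m d) = of_nat d"
  by (simp add: mat_trace_def)

lemma det_nz_inverse:
  assumes A: "(A::complex mat) \<in> carrier_mat n n" and d: "det A \<noteq> 0"
  shows "\<exists>B \<in> carrier_mat n n. A * B = 1\<^sub>m n \<and> B * A = 1\<^sub>m n"
  using det_non_zero_imp_unit[OF A d, of undefined]
  by (auto simp: Units_def ring_mat_def)

lemma mat_trace_similar:
  assumes A: "(A::complex mat) \<in> carrier_mat n n" and S: "S \<in> carrier_mat n n" and T: "T \<in> carrier_mat n n"
   and ST: "T * S = 1\<^sub>m n"
  shows "mat_trace (T * A * S) = mat_trace A"
proof -
  have "mat_trace (T * A * S) = mat_trace (S * (T * A))"
    by (rule mat_trace_comm[of _ n n]) (use A S T in auto)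
  also have "S * (T * A) = (S * T) * A" using A S T by (simp add: assoc_mult_mat)
  also have "S * T = 1\<^sub>m n" using ST S T by (metis mat_mult_left_right_inverse)
  finally show ?thesis using A by simp
qed



lemma det_zero_col:
  assumes A: "(A::complex mat) \<in> carrier_mat k k" and j: "j < k" and z: "\<And>i. i < k \<Longrightarrow> A $$ (i,j) = 0"
  shows "det A = 0"
proof -
  have "A *\<^sub>v unit_vec k j = 0\<^sub>v k"
    using A j z by (intro eq_vecI) (auto simp: mult_mat_vec_def)
  moreover have "unit_vec k j \<noteq> (0\<^sub>v k :: complex vec)"
    using j by (metis index_unit_vec(1) index_zero_vec(1) zero_neq_one)
  moreover have "unit_vec k j \<in> carrier_vec k" by simp
  ultimately show ?thesis using det_0_iff_vec_prod_zero[OF A] by blast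
qed

lemma sum_pad:
  assumes "L \<le> n"
  shows "(\<Sum>k<n. if k < (L::nat) then f k else 0) = (\<Sum>k<L. (f k :: complex))"
proof -
  have "{..<n} \<inter> {k. k < L} = {..<L}" using assms by auto
  then show ?thesis by (simp add: sum.If_cases)
qed

lemma inj_le:
  assumes A: "(A::complex mat) \<in> carrier_mat e d"
    and inj: "\<And>c. c \<in> carrier_vec d \<Longrightarrow> A *\<^sub>v c = 0\<^sub>v e \<Longrightarrow> c = 0\<^sub>v d"
  shows "d \<le> e"
proof (rule ccontr)
  assume "\<not> d \<le> e"
  hence ed: "e < d" by simp
  define A' where "A' = mat d d (\<lambda>(i,j). if i < e then A $$ (i,j) else 0)"
  have A'c: "A' \<in> carrier_mat d d" by (simp add: A'_def)
  have "det (transpose_mat A') = 0"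
    by (rule det_zero_col[of _ d "d - 1"]) (use ed in \<open>auto simp: A'_def\<close>)
  hence "det A' = 0" using det_transpose[OF A'c] by simp
  then obtain v where v: "v \<in> carrier_vec d" "v \<noteq> 0\<^sub>v d" "A' *\<^sub>v v = 0\<^sub>v d"
    using det_0_iff_vec_prod_zero[OF A'c] by auto
  have "A *\<^sub>v v = 0\<^sub>v e"
  proof (rule eq_vecI)
    fix i assume i: "i < dim_vec (0\<^sub>v e :: complex vec)"
    hence "(A' *\<^sub>v v) $ i = 0" using v ed by simp
    moreover have "(A' *\<^sub>v v) $ i = (A *\<^sub>v v) $ i"
    proof -
      have "(A' *\<^sub>v v) $ i = (\<Sum>k<d. A' $$ (i,k) * v $ k)"
        by (rule mv_idx[OF A'c v(1)]) (use i ed in simp)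
      also have "\<dots> = (\<Sum>k<d. A $$ (i,k) * v $ k)" using i ed by (simp add: A'_def)
      also have "\<dots> = (A *\<^sub>v v) $ i" by (rule mv_idx[OF A v(1), symmetric]) (use i in simp)
      finally show ?thesis .
    qed
    ultimately show "(A *\<^sub>v v) $ i = 0\<^sub>v e $ i" using i by simp
  qed (use A in simp)
  with inj v show False by auto
qed

lemma surj_le:
  assumes S: "(S::complex mat) \<in> carrier_mat n L"
    and surj: "\<And>v. v \<in> carrier_vec n \<Longrightarrow> \<exists>c\<in>carrier_vec L. S *\<^sub>v c = v"
  shows "n \<le> L"
proof (rule ccontr)
  assume "\<not> n \<le> L"
  hence Ln: "L < n" by simp
  have "\<forall>i. \<exists>c. i < n \<longrightarrow> c \<in> carrier_vec L \<and> S *\<^sub>v c = unit_vec n i"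
    using surj by (meson unit_vec_carrier)
  then obtain cf where cf: "\<And>i. i < n \<Longrightarrow> cf i \<in> carrier_vec L \<and> S *\<^sub>v cf i = unit_vec n i"
    by metis
  define S' where "S' = mat n n (\<lambda>(i,j). if j < L then S $$ (i,j) else 0)"
  define C' where "C' = mat n n (\<lambda>(k,j). if k < L then cf j $ k else 0)"
  have S'c: "S' \<in> carrier_mat n n" and C'c: "C' \<in> carrier_mat n n" by (auto simp: S'_def C'_def)
  have "S' * C' = 1\<^sub>m n"
  proof (rule eq_matI)
    fix i j assume ij: "i < dim_row (1\<^sub>m n :: complex mat)" "j < dim_col (1\<^sub>m n :: complex mat)"
    have "(S' * C') $$ (i,j) = (\<Sum>k<n. if k < L then S $$ (i,k) * cf j $ k else 0)"
      using ij by (auto simp: S'_def C'_def scalar_prod_def atLeast0LessThan intro!: sum.cong)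
    also have "\<dots> = (\<Sum>k<L. S $$ (i,k) * cf j $ k)" by (rule sum_pad) (use Ln in simp)
    also have "\<dots> = (S *\<^sub>v cf j) $ i"
      by (rule mv_idx[OF S, symmetric]) (use ij cf[of j] in auto)
    also have "\<dots> = 1\<^sub>m n $$ (i,j)" using cf[of j] ij by auto
    finally show "(S' * C') $$ (i,j) = 1\<^sub>m n $$ (i,j)" .
  qed (auto simp: S'_def C'_def)
  moreover have "det S' = 0"
    by (rule det_zero_col[OF S'c, of "n - 1"]) (use Ln in \<open>auto simp: S'_def\<close>)
  ultimately have "det (1\<^sub>m n :: complex mat) = 0" using det_mult[OF S'c C'c] by simp
  then show False by simp
qed



definition indep :: "nat \<Rightarrow> complex vec list \<Rightarrow> bool" where
  "indep n vs \<longleftrightarrow> set vs \<subseteq> carrier_vec n \<and>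
     (\<forall>c\<in>carrier_vec (length vs). mat_of_cols n vs *\<^sub>v c = 0\<^sub>v n \<longrightarrow> c = 0\<^sub>v (length vs))"

definition inspan :: "nat \<Rightarrow> complex vec list \<Rightarrow> complex vec \<Rightarrow> bool" where
  "inspan n vs v \<longleftrightarrow> (\<exists>c\<in>carrier_vec (length vs). mat_of_cols n vs *\<^sub>v c = v)"

lemma moc_mv: "c \<in> carrier_vec (length vs) \<Longrightarrow> i < n \<Longrightarrow>
   (mat_of_cols n vs *\<^sub>v c) $ i = (\<Sum>j<length vs. vs ! j $ i * c $ j)"
  by (subst mv_idx[OF mat_of_cols_carrier(1)]) (auto simp: mat_of_cols_index)

lemma moc_cons:
  assumes c: "(c::complex vec) \<in> carrier_vec (Suc (length vs))" and v: "v \<in> carrier_vec n"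
  shows "mat_of_cols n (v # vs) *\<^sub>v c = c $ 0 \<cdot>\<^sub>v v + mat_of_cols n vs *\<^sub>v vec (length vs) (\<lambda>j. c $ Suc j)"
proof (rule eq_vecI)
  fix i assume i: "i < dim_vec (c $ 0 \<cdot>\<^sub>v v + mat_of_cols n vs *\<^sub>v vec (length vs) (\<lambda>j. c $ Suc j))"
  hence i: "i < n" using v by simp
  have "(mat_of_cols n (v # vs) *\<^sub>v c) $ i = (\<Sum>j<Suc (length vs). (v # vs) ! j $ i * c $ j)"
    using c i by (subst moc_mv) auto
  also have "\<dots> = v $ i * c $ 0 + (\<Sum>j<length vs. vs ! j $ i * c $ Suc j)"
    by (subst sum.lessThan_Suc_shift) simp
  also have "\<dots> = (c $ 0 \<cdot>\<^sub>v v + mat_of_cols n vs *\<^sub>v vec (length vs) (\<lambda>j. c $ Suc j)) $ i"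
    using i v [[show_types]] by (simp add: moc_mv del: index_mult_mat_vec)
  finally show "(mat_of_cols n (v # vs) *\<^sub>v c) $ i = (c $ 0 \<cdot>\<^sub>v v + mat_of_cols n vs *\<^sub>v vec (length vs) (\<lambda>j. c $ Suc j)) $ i" .
qed (use v in simp)

lemma subspace_lincomb:
  assumes W: "is_subspace n W"
  shows "set vs \<subseteq> W \<Longrightarrow> c \<in> carrier_vec (length vs) \<Longrightarrow> mat_of_cols n vs *\<^sub>v c \<in> W"
proof (induction vs arbitrary: c)
  case Nil
  have "mat_of_cols n [] *\<^sub>v c = 0\<^sub>v n" by (rule eq_vecI) (use Nil in \<open>auto simp: moc_mv simp del: index_mult_mat_vec\<close>)
  then show ?case using W by (simp add: is_subspace_def)
next
  case (Cons v vs)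
  have v: "v \<in> carrier_vec n" using Cons W by (auto simp: is_subspace_def)
  have "mat_of_cols n vs *\<^sub>v vec (length vs) (\<lambda>j. c $ Suc j) \<in> W" using Cons by auto
  moreover have "c $ 0 \<cdot>\<^sub>v v \<in> W" using Cons W by (auto simp: is_subspace_def)
  ultimately show ?case using moc_cons[of c vs v n] Cons v W by (auto simp: is_subspace_def)
qed

lemma indep_app:
  assumes ind: "indep n vs" and v: "v \<in> carrier_vec n" and ns: "\<not> inspan n vs v"
  shows "indep n (vs @ [v])"
  unfolding indep_def
proof (intro conjI ballI impI)
  show "set (vs @ [v]) \<subseteq> carrier_vec n" using ind v by (auto simp: indep_def)
  fix c :: "complex vec"
  assume c: "c \<in> carrier_vec (length (vs @ [v]))" and z: "mat_of_cols n (vs @ [v]) *\<^sub>v c = 0\<^sub>v n"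
  let ?k = "length vs"
  define c' where "c' = vec ?k (\<lambda>j. c $ j)"
  have c'c: "c' \<in> carrier_vec ?k" by (simp add: c'_def)
  have eq: "mat_of_cols n vs *\<^sub>v c' + c $ ?k \<cdot>\<^sub>v v = 0\<^sub>v n"
  proof (rule eq_vecI)
    fix i assume "i < dim_vec (0\<^sub>v n :: complex vec)"
    hence i: "i < n" by simp
    have "0 = (mat_of_cols n (vs @ [v]) *\<^sub>v c) $ i" using z i by simp
    also have "\<dots> = (\<Sum>j<Suc ?k. (vs @ [v]) ! j $ i * c $ j)" using c i by (subst moc_mv) auto
    also have "\<dots> = (\<Sum>j<?k. vs ! j $ i * c $ j) + v $ i * c $ ?k"
      by (simp add: nth_append)
    also have "(\<Sum>j<?k. vs ! j $ i * c $ j) = (\<Sum>j<?k. vs ! j $ i * c' $ j)"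
      by (intro sum.cong) (auto simp: c'_def)
    finally show "(mat_of_cols n vs *\<^sub>v c' + c $ ?k \<cdot>\<^sub>v v) $ i = 0\<^sub>v n $ i"
      using i v c'c by (simp add: moc_mv mult.commute del: index_mult_mat_vec)
  qed (use v in simp)
  have ck: "c $ ?k = 0"
  proof (rule ccontr)
    assume nz: "c $ ?k \<noteq> 0"
    have "mat_of_cols n vs *\<^sub>v ((- 1 / c $ ?k) \<cdot>\<^sub>v c') = v"
    proof (rule eq_vecI)
      fix i assume "i < dim_vec v"
      hence i: "i < n" using v by simp
      have "(mat_of_cols n vs *\<^sub>v c') $ i + c $ ?k * v $ i = 0"
        using arg_cong[OF eq, of "\<lambda>x. x $ i"] i v c'c by simp
      hence h: "(\<Sum>j<?k. vs ! j $ i * c' $ j) = - (c $ ?k * v $ i)"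
        using i c'c by (simp add: moc_mv eq_neg_iff_add_eq_0 del: index_mult_mat_vec)
      have "(mat_of_cols n vs *\<^sub>v ((- 1 / c $ ?k) \<cdot>\<^sub>v c')) $ i = (\<Sum>j<?k. vs ! j $ i * ((- 1 / c $ ?k) * c' $ j))"
        using i c'c by (simp add: moc_mv del: index_mult_mat_vec)
      also have "\<dots> = (- 1 / c $ ?k) * (\<Sum>j<?k. vs ! j $ i * c' $ j)"
        by (simp add: sum_distrib_left ac_simps)
      also have "\<dots> = v $ i" using h nz by simp
      finally show "(mat_of_cols n vs *\<^sub>v ((- 1 / c $ ?k) \<cdot>\<^sub>v c')) $ i = v $ i" .
    qed (use v in simp)
    with ns c'c show False unfolding inspan_def by auto
  qed
  have "mat_of_cols n vs *\<^sub>v c' = 0\<^sub>v n" using eq ck v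
  proof -
    have z0: "0 \<cdot>\<^sub>v v = 0\<^sub>v n" using v by (intro eq_vecI) auto
    have "mat_of_cols n vs *\<^sub>v c' \<in> carrier_vec n" by (rule mult_mat_vec_carrier[OF mat_of_cols_carrier(1) c'c])
    then show ?thesis using eq ck z0 by simp
  qed
  hence "c' = 0\<^sub>v ?k" using ind c'c by (auto simp: indep_def)
  show "c = 0\<^sub>v (length (vs @ [v]))"
  proof (rule eq_vecI)
    fix j assume "j < dim_vec (0\<^sub>v (length (vs @ [v])) :: complex vec)"
    hence j: "j < Suc ?k" by simp
    show "c $ j = 0\<^sub>v (length (vs @ [v])) $ j"
    proof (cases "j < ?k")
      case True
      then show ?thesis using \<open>c' = 0\<^sub>v ?k\<close> j
        by (metis c'_def index_vec index_zero_vec(1) length_append_singleton)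
    next
      case False
      then show ?thesis using ck j by (simp add: less_Suc_eq)
    qed
  qed (use c in simp)
qed

lemma indep_length: "indep n vs \<Longrightarrow> length vs \<le> n"
  by (rule inj_le[OF mat_of_cols_carrier(1)]) (auto simp: indep_def)

lemma extend_indep:
  assumes U: "U \<subseteq> carrier_vec n"
  shows "indep n B \<Longrightarrow> set B \<subseteq> U \<Longrightarrow> \<exists>C. set C \<subseteq> U \<and> indep n (B @ C) \<and> (\<forall>u\<in>U. inspan n (B @ C) u)"
proof (induction "n - length B" arbitrary: B rule: less_induct)
  case less
  show ?case
  proof (cases "\<forall>u\<in>U. inspan n B u")
    case True
    then show ?thesis using less by (intro exI[of _ "[]"]) auto
  next
    case False
    then obtain u where u: "u \<in> U" "\<not> inspan n B u" by auto
    have ind: "indep n (B @ [u])" using indep_app[OF less(2) _ u(2)] u U by auto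
    have "length (B @ [u]) \<le> n" using indep_length[OF ind] .
    hence "n - length (B @ [u]) < n - length B" by simp
    from less(1)[OF this ind] less(3) u obtain C where
      C: "set C \<subseteq> U" "indep n (B @ [u] @ C)" "\<forall>v\<in>U. inspan n (B @ [u] @ C) v" by auto
    then show ?thesis using u by (intro exI[of _ "u # C"]) auto
  qed
qed



lemma sum_split_aux: "(\<Sum>k<(m::nat)+r. f k) = (\<Sum>k<m. f k) + (\<Sum>k<r. f (k+m) :: 'x::comm_monoid_add)"
  by (induction r) (auto simp: add_ac)

lemma sum_split: "(m::nat) \<le> d \<Longrightarrow> (\<Sum>k<d. f k) = (\<Sum>k<m. f k) + (\<Sum>k<d-m. f (k+m) :: 'x::comm_monoid_add)"
proof -
  assume "m \<le> d"
  then show ?thesis using sum_split_aux[of f m "d - m"] by simp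
qed

lemma rep_carrier: "is_rep G d \<rho> \<Longrightarrow> g \<in> carrier G \<Longrightarrow> \<rho> g \<in> carrier_mat d d"
  by (simp add: is_rep_def)

lemma rep_mult: "is_rep G d \<rho> \<Longrightarrow> g \<in> carrier G \<Longrightarrow> h \<in> carrier G \<Longrightarrow> \<rho> (g \<otimes>\<^bsub>G\<^esub> h) = \<rho> g * \<rho> h"
  by (simp add: is_rep_def)

lemma rep_one: "is_rep G d \<rho> \<Longrightarrow> \<rho> \<one>\<^bsub>G\<^esub> = 1\<^sub>m d"
  by (simp add: is_rep_def)

lemma indep_Nil: "indep n []"
  by (auto simp: indep_def intro!: eq_vecI)

lemma moc_Nil: "c \<in> carrier_vec 0 \<Longrightarrow> mat_of_cols n [] *\<^sub>v c = 0\<^sub>v n"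
  by (rule eq_vecI) (auto simp: moc_mv simp del: index_mult_mat_vec)

lemma triangularize:
  assumes rep: "is_rep G d \<rho>" and W: "is_subspace d W"
    and inv: "\<forall>g\<in>carrier G. \<forall>w\<in>W. \<rho> g *\<^sub>v w \<in> W"
    and ne0: "W \<noteq> {0\<^sub>v d}" and nall: "W \<noteq> carrier_vec d"
  shows "\<exists>m S T. 0 < m \<and> m < d \<and> S \<in> carrier_mat d d \<and> T \<in> carrier_mat d d \<and> T * S = 1\<^sub>m d \<and>
     (\<forall>g\<in>carrier G. \<forall>i j. m \<le> i \<longrightarrow> i < d \<longrightarrow> j < m \<longrightarrow> (T * \<rho> g * S) $$ (i,j) = 0)"
proof -
  have Wc: "W \<subseteq> carrier_vec d" and W0: "0\<^sub>v d \<in> W" using W by (auto simp: is_subspace_def)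
  obtain C1 where C1: "set C1 \<subseteq> W" "indep d C1" "\<forall>u\<in>W. inspan d C1 u"
    using extend_indep[OF Wc indep_Nil] by auto
  obtain C2 where C2: "indep d (C1 @ C2)" "\<forall>u\<in>carrier_vec d. inspan d (C1 @ C2) u"
    using extend_indep[OF subset_refl C1(2)] C1(1) Wc by blast
  define S where "S = mat_of_cols d (C1 @ C2)"
  have L1: "length (C1 @ C2) \<le> d" by (rule indep_length[OF C2(1)])
  have L2: "d \<le> length (C1 @ C2)"
    by (rule surj_le[OF mat_of_cols_carrier(1)]) (use C2(2) in \<open>auto simp: inspan_def\<close>)
  have L: "length (C1 @ C2) = d" using L1 L2 by simp
  have Sc: "S \<in> carrier_mat d d" using mat_of_cols_carrier(1)[of d "C1 @ C2"] L by (simp add: S_def)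
  have "det S \<noteq> 0"
  proof
    assume "det S = 0"
    then obtain v where v: "v \<in> carrier_vec d" "v \<noteq> 0\<^sub>v d" "S *\<^sub>v v = 0\<^sub>v d"
      using det_0_iff_vec_prod_zero[OF Sc] by auto
    with C2(1) L show False unfolding indep_def S_def by auto
  qed
  then obtain T where Tc: "T \<in> carrier_mat d d" and ST: "S * T = 1\<^sub>m d" and TS: "T * S = 1\<^sub>m d"
    using det_nz_inverse[OF Sc] by auto
  define m where "m = length C1"
  have m0: "0 < m"
  proof (rule ccontr)
    assume "\<not> 0 < m"
    hence "C1 = []" by (simp add: m_def)
    obtain w where w: "w \<in> W" "w \<noteq> 0\<^sub>v d" using ne0 W0 by auto
    then obtain c where "c \<in> carrier_vec 0" "mat_of_cols d [] *\<^sub>v c = w"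
      using C1(3) \<open>C1 = []\<close> by (auto simp: inspan_def)
    with w moc_Nil show False by auto
  qed
  have md: "m < d"
  proof (rule ccontr)
    assume "\<not> m < d"
    moreover have "length C1 + length C2 = d" using L by simp
    ultimately have "length C2 = 0" unfolding m_def by linarith
    hence "C2 = []" by simp
    have "carrier_vec d \<subseteq> W"
    proof
      fix u :: "complex vec" assume "u \<in> carrier_vec d"
      then obtain c where "c \<in> carrier_vec (length C1)" "mat_of_cols d C1 *\<^sub>v c = u"
        using C2(2) \<open>C2 = []\<close> by (auto simp: inspan_def)
      then show "u \<in> W" using subspace_lincomb[OF W C1(1)] by auto
    qed
    with Wc nall show False by auto
  qed
  have block: "(T * \<rho> g * S) $$ (i,j) = 0" if g: "g \<in> carrier G" and ij: "m \<le> i" "i < d" "j < m" for g i j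
  proof -
    have Cj: "C1 ! j \<in> W" using C1(1) ij by (auto simp: m_def)
    hence "\<rho> g *\<^sub>v C1 ! j \<in> W" using inv g by auto
    then obtain c where c: "c \<in> carrier_vec m" "mat_of_cols d C1 *\<^sub>v c = \<rho> g *\<^sub>v C1 ! j"
      using C1(3) by (auto simp: inspan_def m_def)
    define c' where "c' = vec d (\<lambda>k. if k < m then c $ k else 0)"
    have c'c: "c' \<in> carrier_vec d" by (simp add: c'_def)
    have Sc': "S *\<^sub>v c' = mat_of_cols d C1 *\<^sub>v c"
    proof (rule eq_vecI)
      fix k assume "k < dim_vec (mat_of_cols d C1 *\<^sub>v c)"
      hence k: "k < d" by simp
      have "(S *\<^sub>v c') $ k = (\<Sum>l<d. (C1 @ C2) ! l $ k * c' $ l)"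
        unfolding S_def using k c'c L by (subst moc_mv) auto
      also have "\<dots> = (\<Sum>l<d. if l < m then C1 ! l $ k * c $ l else 0)"
        by (intro sum.cong) (auto simp: c'_def nth_append m_def)
      also have "\<dots> = (\<Sum>l<m. C1 ! l $ k * c $ l)" by (rule sum_pad) (use md in simp)
      also have "\<dots> = (mat_of_cols d C1 *\<^sub>v c) $ k" using k c by (subst moc_mv) (auto simp: m_def)
      finally show "(S *\<^sub>v c') $ k = (mat_of_cols d C1 *\<^sub>v c) $ k" .
    qed (simp add: S_def)
    have colS: "col S j = C1 ! j" unfolding S_def using ij Cj Wc
      by (subst col_mat_of_cols) (auto simp: nth_append m_def)
    have rg: "\<rho> g \<in> carrier_mat d d" using rep g by (rule rep_carrier)
    have "col (T * \<rho> g * S) j = (T * \<rho> g) *\<^sub>v col S j"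
      by (rule col_mult2[of _ d d _ d]) (use Tc rg Sc ij md in auto)
    also have "\<dots> = T *\<^sub>v (\<rho> g *\<^sub>v C1 ! j)" using colS Tc rg Cj Wc by auto
    also have "\<dots> = T *\<^sub>v (S *\<^sub>v c')" using c Sc' by simp
    also have "\<dots> = (T * S) *\<^sub>v c'" using Tc Sc c'c by simp
    also have "\<dots> = c'" using TS c'c by simp
    finally have "col (T * \<rho> g * S) j $ i = c' $ i" by simp
    moreover have "col (T * \<rho> g * S) j $ i = (T * \<rho> g * S) $$ (i,j)"
      using Tc rg Sc ij md by simp
    ultimately show ?thesis using ij by (simp add: c'_def)
  qed
  show ?thesis using m0 md Sc Tc TS block by blast
qed



lemma block_split:
  assumes rep: "is_rep G d \<rho>" and md: "m \<le> d"
    and Sc: "S \<in> carrier_mat d d" and Tc: "T \<in> carrier_mat d d" and TS: "T * S = 1\<^sub>m d"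
    and Z: "\<And>g i j. g \<in> carrier G \<Longrightarrow> m \<le> i \<Longrightarrow> i < d \<Longrightarrow> j < m \<Longrightarrow> (T * \<rho> g * S) $$ (i,j) = 0"
  shows "\<exists>\<rho>1 \<rho>2. is_rep G m \<rho>1 \<and> is_rep G (d - m) \<rho>2 \<and>
     (\<forall>g\<in>carrier G. character G \<rho> g = character G \<rho>1 g + character G \<rho>2 g)"
proof -
  define T' where "T' g = T * \<rho> g * S" for g
  have ST: "S * T = 1\<^sub>m d" using Sc Tc TS by (metis mat_mult_left_right_inverse)
  have rc: "\<And>g. g \<in> carrier G \<Longrightarrow> \<rho> g \<in> carrier_mat d d" using rep by (rule rep_carrier)
  have T'c: "\<And>g. g \<in> carrier G \<Longrightarrow> T' g \<in> carrier_mat d d" unfolding T'_def using rc Tc Sc by (meson mult_carrier_mat)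
  have STX: "S * (T * X) = X" if "X \<in> carrier_mat d d" for X
    using that Sc Tc ST by (metis assoc_mult_mat left_mult_one_mat)
  have T'm: "T' (g \<otimes>\<^bsub>G\<^esub> h) = T' g * T' h" if g: "g \<in> carrier G" and h: "h \<in> carrier G" for g h
  proof -
    have "T' g * T' h = T * (\<rho> g * (S * (T * (\<rho> h * S))))"
      using rc[OF g] rc[OF h] Sc Tc by (simp add: T'_def assoc_mult_mat[of _ d d _ d _ d])
    also have "\<dots> = T * (\<rho> g * (\<rho> h * S))" using STX rc[OF h] Sc by simp
    also have "\<dots> = T' (g \<otimes>\<^bsub>G\<^esub> h)"
      using rc[OF g] rc[OF h] Sc Tc rep_mult[OF rep g h] by (simp add: T'_def assoc_mult_mat[of _ d d _ d _ d])
    finally show ?thesis by simp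
  qed
  have T'1: "T' \<one>\<^bsub>G\<^esub> = 1\<^sub>m d" using rep_one[OF rep] Tc Sc TS by (simp add: T'_def)
  define \<rho>1 where "\<rho>1 g = mat m m (\<lambda>(i,j). T' g $$ (i,j))" for g
  define \<rho>2 where "\<rho>2 g = mat (d-m) (d-m) (\<lambda>(i,j). T' g $$ (i+m,j+m))" for g
  have Z': "T' g $$ (i,j) = 0" if "g \<in> carrier G" "m \<le> i" "i < d" "j < m" for g i j
    using Z that by (simp add: T'_def)
  have r1: "is_rep G m \<rho>1" unfolding is_rep_def
  proof (intro conjI ballI)
    show "\<rho>1 g \<in> carrier_mat m m" for g by (simp add: \<rho>1_def)
    show "\<rho>1 \<one>\<^bsub>G\<^esub> = 1\<^sub>m m" using T'1 md by (intro eq_matI) (auto simp: \<rho>1_def)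
    fix g h assume g: "g \<in> carrier G" and h: "h \<in> carrier G"
    show "\<rho>1 (g \<otimes>\<^bsub>G\<^esub> h) = \<rho>1 g * \<rho>1 h"
    proof (rule eq_matI)
      fix i j assume "i < dim_row (\<rho>1 g * \<rho>1 h)" "j < dim_col (\<rho>1 g * \<rho>1 h)"
      hence ij: "i < m" "j < m" by (auto simp: \<rho>1_def)
      have "\<rho>1 (g \<otimes>\<^bsub>G\<^esub> h) $$ (i,j) = (T' g * T' h) $$ (i,j)" using ij T'm[OF g h] by (simp add: \<rho>1_def)
      also have "\<dots> = (\<Sum>k<d. T' g $$ (i,k) * T' h $$ (k,j))"
        using ij md by (intro mm_idx[OF T'c[OF g] T'c[OF h]]) auto
      also have "\<dots> = (\<Sum>k<m. T' g $$ (i,k) * T' h $$ (k,j)) + (\<Sum>k<d-m. T' g $$ (i,k+m) * T' h $$ (k+m,j))"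
        by (rule sum_split[OF md])
      also have "(\<Sum>k<d-m. T' g $$ (i,k+m) * T' h $$ (k+m,j)) = 0"
        using Z'[OF h] ij by (intro sum.neutral) auto
      also have "(\<Sum>k<m. T' g $$ (i,k) * T' h $$ (k,j)) = (\<rho>1 g * \<rho>1 h) $$ (i,j)"
        using ij by (subst mm_idx[of _ m m _ m]) (auto simp: \<rho>1_def)
      finally show "\<rho>1 (g \<otimes>\<^bsub>G\<^esub> h) $$ (i,j) = (\<rho>1 g * \<rho>1 h) $$ (i,j)" by simp
    qed (auto simp: \<rho>1_def)
  qed
  have r2: "is_rep G (d-m) \<rho>2" unfolding is_rep_def
  proof (intro conjI ballI)
    show "\<rho>2 g \<in> carrier_mat (d-m) (d-m)" for g by (simp add: \<rho>2_def)
    show "\<rho>2 \<one>\<^bsub>G\<^esub> = 1\<^sub>m (d-m)" using T'1 md by (intro eq_matI) (auto simp: \<rho>2_def)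
    fix g h assume g: "g \<in> carrier G" and h: "h \<in> carrier G"
    show "\<rho>2 (g \<otimes>\<^bsub>G\<^esub> h) = \<rho>2 g * \<rho>2 h"
    proof (rule eq_matI)
      fix i j assume "i < dim_row (\<rho>2 g * \<rho>2 h)" "j < dim_col (\<rho>2 g * \<rho>2 h)"
      hence ij: "i < d-m" "j < d-m" by (auto simp: \<rho>2_def)
      have "\<rho>2 (g \<otimes>\<^bsub>G\<^esub> h) $$ (i,j) = (T' g * T' h) $$ (i+m,j+m)" using ij T'm[OF g h] by (simp add: \<rho>2_def)
      also have "\<dots> = (\<Sum>k<d. T' g $$ (i+m,k) * T' h $$ (k,j+m))"
        using ij md by (intro mm_idx[OF T'c[OF g] T'c[OF h]]) auto
      also have "\<dots> = (\<Sum>k<m. T' g $$ (i+m,k) * T' h $$ (k,j+m)) + (\<Sum>k<d-m. T' g $$ (i+m,k+m) * T' h $$ (k+m,j+m))"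
        by (rule sum_split[OF md])
      also have "(\<Sum>k<m. T' g $$ (i+m,k) * T' h $$ (k,j+m)) = 0"
        using Z'[OF g] ij by (intro sum.neutral) auto
      also have "(\<Sum>k<d-m. T' g $$ (i+m,k+m) * T' h $$ (k+m,j+m)) = (\<rho>2 g * \<rho>2 h) $$ (i,j)"
        using ij by (subst mm_idx[of _ "d-m" "d-m" _ "d-m"]) (auto simp: \<rho>2_def)
      finally show "\<rho>2 (g \<otimes>\<^bsub>G\<^esub> h) $$ (i,j) = (\<rho>2 g * \<rho>2 h) $$ (i,j)" by simp
    qed (auto simp: \<rho>2_def)
  qed
  have ch: "character G \<rho> g = character G \<rho>1 g + character G \<rho>2 g" if g: "g \<in> carrier G" for g
  proof -
    have "character G \<rho> g = mat_trace (T' g)"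
      using g mat_trace_similar[OF rc[OF g] Sc Tc TS] by (simp add: character_def T'_def)
    also have "\<dots> = (\<Sum>i<d. T' g $$ (i,i))" by (rule mat_trace_def2[OF T'c[OF g]])
    also have "\<dots> = (\<Sum>i<m. T' g $$ (i,i)) + (\<Sum>i<d-m. T' g $$ (i+m,i+m))" by (rule sum_split[OF md])
    also have "\<dots> = character G \<rho>1 g + character G \<rho>2 g"
      using g by (simp add: character_def mat_trace_def \<rho>1_def \<rho>2_def)
    finally show ?thesis .
  qed
  show ?thesis using r1 r2 ch by blast
qed

lemma sum_indicator_char:
  assumes "finite A" "\<chi> \<in> A"
  shows "(\<Sum>\<psi>\<in>A. (if \<psi> = \<chi> then 1 else 0) * \<psi> g) = (\<chi> g :: complex)"
proof -
  have "(\<Sum>\<psi>\<in>A. (if \<psi> = \<chi> then 1 else 0) * \<psi> g) = (\<Sum>\<psi>\<in>A. if \<psi> = \<chi> then \<psi> g else 0)"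
    by (intro sum.cong) auto
  also have "\<dots> = \<chi> g" using assms by (simp add: sum.delta')
  finally show ?thesis .
qed

lemma char_decomp:
  assumes fin: "finite (irr_chars G)"
  shows "is_rep G d \<rho> \<Longrightarrow> \<exists>c. \<forall>g\<in>carrier G. character G \<rho> g = (\<Sum>\<psi>\<in>irr_chars G. c \<psi> * \<psi> g)"
proof (induction d arbitrary: \<rho> rule: less_induct)
  case (less d)
  show ?case
  proof (cases "is_irred_rep G d \<rho>")
    case True
    hence mem: "character G \<rho> \<in> irr_chars G" by (auto simp: irr_chars_def)
    show ?thesis
      by (rule exI[of _ "\<lambda>\<psi>. if \<psi> = character G \<rho> then 1 else 0"])
        (simp add: sum_indicator_char[OF fin mem])
  next
    case False
    show ?thesis
    proof (cases "d = 0")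
      case True
      have "character G \<rho> g = 0" if "g \<in> carrier G" for g
        using that rep_carrier[OF less(2) that] True by (simp add: character_def mat_trace_def)
      then show ?thesis by (intro exI[of _ "\<lambda>_. 0"]) simp
    next
      case d0: False
      from False less(2) d0 obtain W where W: "is_subspace d W" "\<forall>g\<in>carrier G. \<forall>w\<in>W. \<rho> g *\<^sub>v w \<in> W"
        "W \<noteq> {0\<^sub>v d}" "W \<noteq> carrier_vec d"
        unfolding is_irred_rep_def by auto
      obtain m S T where mST: "0 < m" "m < d" "S \<in> carrier_mat d d" "T \<in> carrier_mat d d" "T * S = 1\<^sub>m d"
        "\<forall>g\<in>carrier G. \<forall>i j. m \<le> i \<longrightarrow> i < d \<longrightarrow> j < m \<longrightarrow> (T * \<rho> g * S) $$ (i,j) = 0"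
        using triangularize[OF less(2) W] by blast
      obtain \<rho>1 \<rho>2 where r: "is_rep G m \<rho>1" "is_rep G (d - m) \<rho>2"
        "\<forall>g\<in>carrier G. character G \<rho> g = character G \<rho>1 g + character G \<rho>2 g"
        using block_split[OF less(2) _ mST(3,4,5)] mST(2,6) by (metis less_imp_le_nat)
      obtain c1 where c1: "\<forall>g\<in>carrier G. character G \<rho>1 g = (\<Sum>\<psi>\<in>irr_chars G. c1 \<psi> * \<psi> g)"
        using less(1)[OF mST(2) r(1)] by blast
      obtain c2 where c2: "\<forall>g\<in>carrier G. character G \<rho>2 g = (\<Sum>\<psi>\<in>irr_chars G. c2 \<psi> * \<psi> g)"
        using less(1)[OF _ r(2)] mST(1,2) by auto
      show ?thesis
        by (rule exI[of _ "\<lambda>\<psi>. c1 \<psi> + c2 \<psi>"]) (simp add: r(3) c1 c2 sum.distrib distrib_right)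
    qed
  qed
qed



locale fgrp = group G for G :: "('a, 'b) monoid_scheme" (structure) +
  assumes fin: "finite (carrier G)"
begin

lemma rep_inv:
  assumes rep: "is_rep G d \<rho>" and g: "g \<in> carrier G"
  shows "\<rho> (inv g) * \<rho> g = 1\<^sub>m d" "\<rho> g * \<rho> (inv g) = 1\<^sub>m d"
  using rep_mult[OF rep inv_closed[OF g] g] rep_mult[OF rep g inv_closed[OF g]] rep_one[OF rep] g
  by auto

end

lemma mv_zero: "(A::complex mat) \<in> carrier_mat n m \<Longrightarrow> A *\<^sub>v 0\<^sub>v m = 0\<^sub>v n"
  by (rule eq_vecI) (auto simp: mv_idx simp del: index_mult_mat_vec)

lemma smult_mat_vec: "(B::complex mat) \<in> carrier_mat n m \<Longrightarrow> v \<in> carrier_vec m \<Longrightarrow>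
   (a \<cdot>\<^sub>m B) *\<^sub>v v = a \<cdot>\<^sub>v (B *\<^sub>v v)"
  by (rule eq_vecI) (auto simp: mv_idx[of _ n m] sum_distrib_left ac_simps simp del: index_mult_mat_vec)

lemma mat_zeroI:
  assumes A: "(A::complex mat) \<in> carrier_mat e d" and z: "\<And>v. v \<in> carrier_vec d \<Longrightarrow> A *\<^sub>v v = 0\<^sub>v e"
  shows "A = 0\<^sub>m e d"
proof (rule eq_matI)
  fix i j assume ij: "i < dim_row (0\<^sub>m e d :: complex mat)" "j < dim_col (0\<^sub>m e d :: complex mat)"
  have "A $$ (i,j) = (A *\<^sub>v unit_vec d j) $ i" using A ij by simp
  also have "\<dots> = 0" using z[of "unit_vec d j"] ij by simp
  finally show "A $$ (i,j) = 0\<^sub>m e d $$ (i,j)" using ij by simp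
qed (use A in auto)

lemma kernel_cases:
  assumes irr: "is_irred_rep G d \<rho>" and A: "(A::complex mat) \<in> carrier_mat e d"
    and \<sigma>c: "\<And>g. g \<in> carrier G \<Longrightarrow> \<sigma> g \<in> carrier_mat e e"
    and int: "\<And>g. g \<in> carrier G \<Longrightarrow> \<sigma> g * A = A * \<rho> g"
  shows "A = 0\<^sub>m e d \<or> (\<forall>v\<in>carrier_vec d. A *\<^sub>v v = 0\<^sub>v e \<longrightarrow> v = 0\<^sub>v d)"
proof -
  define K where "K = {v \<in> carrier_vec d. A *\<^sub>v v = 0\<^sub>v e}"
  have rep: "is_rep G d \<rho>" using irr by (simp add: is_irred_rep_def)
  have sub: "is_subspace d K" unfolding is_subspace_def K_def
    using A by (auto simp: mult_add_distrib_mat_vec mult_mat_vec)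
  have inv: "\<forall>g\<in>carrier G. \<forall>w\<in>K. \<rho> g *\<^sub>v w \<in> K"
  proof (intro ballI)
    fix g w assume g: "g \<in> carrier G" and w: "w \<in> K"
    have rg: "\<rho> g \<in> carrier_mat d d" using rep_carrier[OF rep g] .
    have "A *\<^sub>v (\<rho> g *\<^sub>v w) = (A * \<rho> g) *\<^sub>v w" using A rg w by (simp add: K_def)
    also have "\<dots> = (\<sigma> g * A) *\<^sub>v w" using int[OF g] by simp
    also have "\<dots> = \<sigma> g *\<^sub>v (A *\<^sub>v w)" using A \<sigma>c[OF g] w by (simp add: K_def)
    also have "\<dots> = 0\<^sub>v e" using w \<sigma>c[OF g] mv_zero by (simp add: K_def)
    finally show "\<rho> g *\<^sub>v w \<in> K" using w rg by (simp add: K_def)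
  qed
  from irr sub inv have "K = {0\<^sub>v d} \<or> K = carrier_vec d" by (simp add: is_irred_rep_def)
  then show ?thesis
  proof
    assume "K = {0\<^sub>v d}" then show ?thesis by (auto simp: K_def)
  next
    assume "K = carrier_vec d"
    hence "A = 0\<^sub>m e d" using mat_zeroI[OF A] by (auto simp: K_def)
    then show ?thesis by simp
  qed
qed

lemma image_cases:
  assumes irr: "is_irred_rep G e \<sigma>" and A: "(A::complex mat) \<in> carrier_mat e d"
    and \<rho>c: "\<And>g. g \<in> carrier G \<Longrightarrow> \<rho> g \<in> carrier_mat d d"
    and int: "\<And>g. g \<in> carrier G \<Longrightarrow> \<sigma> g * A = A * \<rho> g"
  shows "A = 0\<^sub>m e d \<or> (\<forall>u\<in>carrier_vec e. \<exists>v\<in>carrier_vec d. A *\<^sub>v v = u)"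
proof -
  define I where "I = {A *\<^sub>v v | v. v \<in> carrier_vec d}"
  have rep: "is_rep G e \<sigma>" using irr by (simp add: is_irred_rep_def)
  have sub: "is_subspace e I" unfolding is_subspace_def I_def
  proof (intro conjI ballI allI)
    show "{A *\<^sub>v v |v. v \<in> carrier_vec d} \<subseteq> carrier_vec e" using A by auto
    show "0\<^sub>v e \<in> {A *\<^sub>v v |v. v \<in> carrier_vec d}"
      using A by (intro CollectI exI[of _ "0\<^sub>v d"]) auto
    fix x y assume "x \<in> {A *\<^sub>v v |v. v \<in> carrier_vec d}" "y \<in> {A *\<^sub>v v |v. v \<in> carrier_vec d}"
    then obtain a b where "a \<in> carrier_vec d" "b \<in> carrier_vec d" "x = A *\<^sub>v a" "y = A *\<^sub>v b" by auto
    then show "x + y \<in> {A *\<^sub>v v |v. v \<in> carrier_vec d}"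
      using A by (intro CollectI exI[of _ "a + b"]) (auto simp: mult_add_distrib_mat_vec)
  next
    fix c x assume "x \<in> {A *\<^sub>v v |v. v \<in> carrier_vec d}"
    then obtain a where "a \<in> carrier_vec d" "x = A *\<^sub>v a" by auto
    then show "c \<cdot>\<^sub>v x \<in> {A *\<^sub>v v |v. v \<in> carrier_vec d}"
      using A by (intro CollectI exI[of _ "c \<cdot>\<^sub>v a"]) (auto simp: mult_mat_vec)
  qed
  have inv: "\<forall>g\<in>carrier G. \<forall>w\<in>I. \<sigma> g *\<^sub>v w \<in> I"
  proof (intro ballI)
    fix g w assume g: "g \<in> carrier G" and w: "w \<in> I"
    then obtain v where v: "v \<in> carrier_vec d" "w = A *\<^sub>v v" by (auto simp: I_def)
    have sg: "\<sigma> g \<in> carrier_mat e e" using rep_carrier[OF rep g] .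
    have "\<sigma> g *\<^sub>v w = (\<sigma> g * A) *\<^sub>v v" using A sg v by simp
    also have "\<dots> = A *\<^sub>v (\<rho> g *\<^sub>v v)" using int[OF g] A \<rho>c[OF g] v by simp
    finally show "\<sigma> g *\<^sub>v w \<in> I" using \<rho>c[OF g] v by (auto simp: I_def)
  qed
  from irr sub inv have "I = {0\<^sub>v e} \<or> I = carrier_vec e" by (simp add: is_irred_rep_def)
  then show ?thesis
  proof
    assume "I = {0\<^sub>v e}"
    hence "A = 0\<^sub>m e d" using mat_zeroI[OF A] by (auto simp: I_def)
    then show ?thesis by simp
  next
    assume h: "I = carrier_vec e"
    have "\<forall>u\<in>carrier_vec e. \<exists>v\<in>carrier_vec d. A *\<^sub>v v = u"
    proof
      fix u :: "complex vec" assume "u \<in> carrier_vec e"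
      hence "u \<in> I" using h by simp
      then show "\<exists>v\<in>carrier_vec d. A *\<^sub>v v = u" unfolding I_def by blast
    qed
    then show ?thesis by simp
  qed
qed

lemma schur_zero:
  assumes irr\<rho>: "is_irred_rep G d \<rho>" and irr\<sigma>: "is_irred_rep G e \<sigma>"
    and A: "(A::complex mat) \<in> carrier_mat e d"
    and int: "\<And>g. g \<in> carrier G \<Longrightarrow> \<sigma> g * A = A * \<rho> g"
    and neq: "character G \<sigma> \<noteq> character G \<rho>"
  shows "A = 0\<^sub>m e d"
proof (rule ccontr)
  assume nz: "A \<noteq> 0\<^sub>m e d"
  have rep\<rho>: "is_rep G d \<rho>" and rep\<sigma>: "is_rep G e \<sigma>" using irr\<rho> irr\<sigma> by (auto simp: is_irred_rep_def)
  have inj: "\<forall>v\<in>carrier_vec d. A *\<^sub>v v = 0\<^sub>v e \<longrightarrow> v = 0\<^sub>v d"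
    using kernel_cases[OF irr\<rho> A rep_carrier[OF rep\<sigma>] int] nz by auto
  have surj: "\<forall>u\<in>carrier_vec e. \<exists>v\<in>carrier_vec d. A *\<^sub>v v = u"
    using image_cases[OF irr\<sigma> A rep_carrier[OF rep\<rho>] int] nz by auto
  have "d \<le> e" by (rule inj_le[OF A]) (use inj in auto)
  moreover have "e \<le> d" by (rule surj_le[OF A]) (use surj in auto)
  ultimately have de: "d = e" by simp
  have Ac: "A \<in> carrier_mat d d" using A de by simp
  have "det A \<noteq> 0"
  proof
    assume "det A = 0"
    then obtain v where "v \<in> carrier_vec d" "v \<noteq> 0\<^sub>v d" "A *\<^sub>v v = 0\<^sub>v d"
      using det_0_iff_vec_prod_zero[OF Ac] by auto
    with inj de show False by auto
  qed
  then obtain B where Bc: "B \<in> carrier_mat d d" and AB: "A * B = 1\<^sub>m d" and BA: "B * A = 1\<^sub>m d"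
    using det_nz_inverse[OF Ac] by auto
  have "character G \<sigma> = character G \<rho>"
  proof
    fix g show "character G \<sigma> g = character G \<rho> g"
    proof (cases "g \<in> carrier G")
      case False then show ?thesis by (simp add: character_def)
    next
      case True
      have rg: "\<rho> g \<in> carrier_mat d d" using rep_carrier[OF rep\<rho> True] .
      have sg: "\<sigma> g \<in> carrier_mat d d" using rep_carrier[OF rep\<sigma> True] de by simp
      have "\<sigma> g = \<sigma> g * A * B" using sg Ac Bc AB by (simp add: assoc_mult_mat[of _ d d _ d _ d])
      also have "\<dots> = A * \<rho> g * B" using int[OF True] by simp
      finally have "mat_trace (\<sigma> g) = mat_trace (A * \<rho> g * B)" by simp
      also have "\<dots> = mat_trace (\<rho> g)" by (rule mat_trace_similar[OF rg Bc Ac AB])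
      finally show ?thesis using True by (simp add: character_def)
    qed
  qed
  with neq show False by simp
qed

lemma schur_scalar:
  assumes irr: "is_irred_rep G d \<rho>" and A: "(A::complex mat) \<in> carrier_mat d d"
    and int: "\<And>g. g \<in> carrier G \<Longrightarrow> \<rho> g * A = A * \<rho> g"
  shows "\<exists>a. A = a \<cdot>\<^sub>m 1\<^sub>m d"
proof -
  have rep: "is_rep G d \<rho>" and d0: "d > 0" using irr by (auto simp: is_irred_rep_def)
  obtain a where "a \<in> spectrum A" using spectrum_non_empty[OF A d0] by auto
  then obtain v where v: "eigenvector A v a" by (auto simp: spectrum_def eigenvalue_def)
  hence vc: "v \<in> carrier_vec d" "v \<noteq> 0\<^sub>v d" "A *\<^sub>v v = a \<cdot>\<^sub>v v" using A by (auto simp: eigenvector_def)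
  define B where "B = A - a \<cdot>\<^sub>m 1\<^sub>m d"
  have Bc: "B \<in> carrier_mat d d" unfolding B_def by (rule minus_carrier_mat) simp
  have intB: "\<rho> g * B = B * \<rho> g" if g: "g \<in> carrier G" for g
  proof -
    have rg: "\<rho> g \<in> carrier_mat d d" using rep_carrier[OF rep g] .
    have "\<rho> g * B = \<rho> g * A - a \<cdot>\<^sub>m \<rho> g" using rg A by (simp add: B_def mult_minus_distrib_mat mult_smult_distrib[of _ d d _ d])
    also have "\<dots> = A * \<rho> g - a \<cdot>\<^sub>m \<rho> g" using int[OF g] by simp
    also have "\<dots> = B * \<rho> g" using rg A by (simp add: B_def minus_mult_distrib_mat mult_smult_assoc_mat[of _ d d _ d])
    finally show ?thesis .
  qed
  have "B *\<^sub>v v = 0\<^sub>v d"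
    using vc A by (simp add: B_def minus_mult_distrib_mat_vec smult_mat_vec[of _ d d])
  hence "B = 0\<^sub>m d d" using kernel_cases[OF irr Bc rep_carrier[OF rep] intB] vc by auto
  hence B0: "B = 0\<^sub>m d d" .
  have "A = a \<cdot>\<^sub>m 1\<^sub>m d"
  proof (rule eq_matI)
    fix i j assume ij: "i < dim_row (a \<cdot>\<^sub>m 1\<^sub>m d)" "j < dim_col (a \<cdot>\<^sub>m (1\<^sub>m d :: complex mat))"
    have "B $$ (i,j) = 0" using B0 ij by simp
    then show "A $$ (i,j) = (a \<cdot>\<^sub>m 1\<^sub>m d) $$ (i,j)" using ij A by (simp add: B_def)
  qed (use A in auto)
  then show ?thesis by blast
qed



definition avg :: "('a, 'b) monoid_scheme \<Rightarrow> ('a \<Rightarrow> complex mat) \<Rightarrow> ('a \<Rightarrow> complex mat) \<Rightarrow> complex mat \<Rightarrow> nat \<Rightarrow> nat \<Rightarrow> complex mat" where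
  "avg G \<sigma> \<rho> E e d = mat e d (\<lambda>(i,j). \<Sum>g\<in>carrier G. (\<sigma> g * E * \<rho> (inv\<^bsub>G\<^esub> g)) $$ (i,j))"

definition Eu :: "nat \<Rightarrow> nat \<Rightarrow> nat \<Rightarrow> nat \<Rightarrow> complex mat" where
  "Eu e d i l = mat e d (\<lambda>(a,b). if a = i \<and> b = l then 1 else 0)"

lemma Eu_carrier[simp]: "Eu e d i l \<in> carrier_mat e d" by (simp add: Eu_def)

lemma Eu_left:
  assumes X: "X \<in> carrier_mat n e" and i: "i < e" and a: "a < n" and c: "c < d"
  shows "(X * Eu e d i l) $$ (a,c) = (if c = l then X $$ (a,i) else 0)"
proof -
  have "(X * Eu e d i l) $$ (a,c) = (\<Sum>k<e. X $$ (a,k) * Eu e d i l $$ (k,c))"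
    using X a c by (intro mm_idx) auto
  also have "\<dots> = (\<Sum>k<e. if k = i then (if c = l then X $$ (a,i) else 0) else 0)"
    using c by (intro sum.cong) (auto simp: Eu_def)
  also have "\<dots> = (if c = l then X $$ (a,i) else 0)" using i by (simp add: sum.delta)
  finally show ?thesis .
qed

lemma Eu_prod:
  assumes X: "X \<in> carrier_mat n e" and Y: "Y \<in> carrier_mat d p" and i: "i < e" and l: "l < d"
    and a: "a < n" and b: "b < p"
  shows "(X * Eu e d i l * Y) $$ (a,b) = X $$ (a,i) * Y $$ (l,b)"
proof -
  have XE: "X * Eu e d i l \<in> carrier_mat n d" using X by simp
  have "(X * Eu e d i l * Y) $$ (a,b) = (\<Sum>c<d. (X * Eu e d i l) $$ (a,c) * Y $$ (c,b))"
    using XE Y a b by (intro mm_idx) auto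
  also have "\<dots> = (\<Sum>c<d. if c = l then X $$ (a,i) * Y $$ (c,b) else 0)"
    using X i a by (intro sum.cong) (auto simp: Eu_left)
  also have "\<dots> = X $$ (a,i) * Y $$ (l,b)" using l by (simp add: sum.delta)
  finally show ?thesis .
qed

lemma mat_trace_Eu: "i < d \<Longrightarrow> l < d \<Longrightarrow> mat_trace (Eu d d i l) = (if i = l then 1 else 0)"
  by (auto simp: mat_trace_def Eu_def sum.delta)

context fgrp
begin

lemma bij_left: "h \<in> carrier G \<Longrightarrow> bij_betw (\<lambda>x. h \<otimes> x) (carrier G) (carrier G)"
  by (rule bij_betw_byWitness[where f' = "\<lambda>x. inv h \<otimes> x"]) (auto simp: m_assoc[symmetric])

lemma bij_inv: "bij_betw (\<lambda>x. inv x) (carrier G) (carrier G)"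
  by (rule bij_betw_byWitness[where f' = "\<lambda>x. inv x"]) auto

lemma avg_carrier[simp]: "avg G \<sigma> \<rho> E e d \<in> carrier_mat e d" by (simp add: avg_def)

lemma avg_int:
  assumes r\<sigma>: "is_rep G e \<sigma>" and r\<rho>: "is_rep G d \<rho>" and E: "E \<in> carrier_mat e d" and h: "h \<in> carrier G"
  shows "\<sigma> h * avg G \<sigma> \<rho> E e d = avg G \<sigma> \<rho> E e d * \<rho> h"
proof (rule eq_matI)
  fix i j assume "i < dim_row (avg G \<sigma> \<rho> E e d * \<rho> h)" "j < dim_col (avg G \<sigma> \<rho> E e d * \<rho> h)"
  hence ij: "i < e" "j < d" using rep_carrier[OF r\<rho> h] by (auto simp: avg_def)
  have sc: "\<And>g. g \<in> carrier G \<Longrightarrow> \<sigma> g \<in> carrier_mat e e" using rep_carrier[OF r\<sigma>] .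
  have rc: "\<And>g. g \<in> carrier G \<Longrightarrow> \<rho> g \<in> carrier_mat d d" using rep_carrier[OF r\<rho>] .
  define X where "X g = \<sigma> g * E * \<rho> (inv g)" for g
  have Xc: "g \<in> carrier G \<Longrightarrow> X g \<in> carrier_mat e d" for g unfolding X_def using sc rc E by (meson mult_carrier_mat inv_closed)
  have "(\<sigma> h * avg G \<sigma> \<rho> E e d) $$ (i,j) = (\<Sum>k<e. \<sigma> h $$ (i,k) * (\<Sum>g\<in>carrier G. X g $$ (k,j)))"
    using sc[OF h] ij by (subst mm_idx[of _ e e _ d]) (auto simp: avg_def X_def)
  also have "\<dots> = (\<Sum>g\<in>carrier G. \<Sum>k<e. \<sigma> h $$ (i,k) * X g $$ (k,j))"
    by (simp add: sum_distrib_left sum.swap[of _ "{..<e}"])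
  also have "\<dots> = (\<Sum>g\<in>carrier G. (\<sigma> h * X g) $$ (i,j))"
    using sc[OF h] Xc ij by (intro sum.cong refl) (simp add: mm_idx[of _ e e _ d])
  also have "\<dots> = (\<Sum>g\<in>carrier G. (\<sigma> (h \<otimes> g) * E * \<rho> (inv g)) $$ (i,j))"
  proof (intro sum.cong refl)
    fix g assume g: "g \<in> carrier G"
    have "\<sigma> h * X g = (\<sigma> h * \<sigma> g) * E * \<rho> (inv g)"
      using sc[OF h] sc[OF g] rc[OF inv_closed[OF g]] E by (simp add: X_def assoc_mult_mat[of _ e e _ e _ d] assoc_mult_mat[of _ e e _ d _ d] assoc_mult_mat[of _ e d _ d _ d])
    then show "(\<sigma> h * X g) $$ (i,j) = (\<sigma> (h \<otimes> g) * E * \<rho> (inv g)) $$ (i,j)"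
      using rep_mult[OF r\<sigma> h g] by simp
  qed
  also have "\<dots> = (\<Sum>g\<in>carrier G. (\<sigma> g * E * \<rho> (inv g \<otimes> h)) $$ (i,j))"
  proof -
    have "(\<Sum>g\<in>carrier G. (\<sigma> g * E * \<rho> (inv g \<otimes> h)) $$ (i,j)) =
          (\<Sum>g\<in>carrier G. (\<sigma> (h \<otimes> g) * E * \<rho> (inv (h \<otimes> g) \<otimes> h)) $$ (i,j))"
      by (rule sum.reindex_bij_betw[OF bij_left[OF h], symmetric])
    also have "\<dots> = (\<Sum>g\<in>carrier G. (\<sigma> (h \<otimes> g) * E * \<rho> (inv g)) $$ (i,j))"
      using h by (intro sum.cong refl) (simp add: inv_mult_group m_assoc)
    finally show ?thesis by simp
  qed
  also have "\<dots> = (\<Sum>g\<in>carrier G. (X g * \<rho> h) $$ (i,j))"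
  proof (intro sum.cong refl)
    fix g assume g: "g \<in> carrier G"
    have "X g * \<rho> h = \<sigma> g * E * (\<rho> (inv g) * \<rho> h)"
      using sc[OF g] rc[OF h] rc[OF inv_closed[OF g]] E by (simp add: X_def assoc_mult_mat[of _ e e _ d _ d] assoc_mult_mat[of _ e d _ d _ d])
    then show "(\<sigma> g * E * \<rho> (inv g \<otimes> h)) $$ (i,j) = (X g * \<rho> h) $$ (i,j)"
      using rep_mult[OF r\<rho> inv_closed[OF g] h] by simp
  qed
  also have "\<dots> = (\<Sum>g\<in>carrier G. \<Sum>k<d. X g $$ (i,k) * \<rho> h $$ (k,j))"
    using rc[OF h] Xc ij by (intro sum.cong refl) (simp add: mm_idx[of _ e d _ d])
  also have "\<dots> = (\<Sum>k<d. (\<Sum>g\<in>carrier G. X g $$ (i,k)) * \<rho> h $$ (k,j))"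
    by (simp add: sum_distrib_right sum.swap[of _ "carrier G"])
  also have "\<dots> = (avg G \<sigma> \<rho> E e d * \<rho> h) $$ (i,j)"
    using rc[OF h] ij by (subst mm_idx[of _ e d _ d]) (auto simp: avg_def X_def)
  finally show "(\<sigma> h * avg G \<sigma> \<rho> E e d) $$ (i,j) = (avg G \<sigma> \<rho> E e d * \<rho> h) $$ (i,j)" .
qed (use rep_carrier[OF r\<sigma> h] rep_carrier[OF r\<rho> h] in \<open>auto simp: avg_def\<close>)

end



lemma mat_trace_prod: "A \<in> carrier_mat n m \<Longrightarrow> B \<in> carrier_mat m n \<Longrightarrow>
  mat_trace (A * B) = (\<Sum>i<n. \<Sum>k<m. A $$ (i,k) * B $$ (k,i))"
  by (simp add: mat_trace_def scalar_prod_def atLeast0LessThan)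

lemma mat_trace_smult_one: "mat_trace (a \<cdot>\<^sub>m 1\<^sub>m d) = a * of_nat d"
  by (simp add: mat_trace_def)

context fgrp
begin

lemma char_in: "g \<in> carrier G \<Longrightarrow> character G \<rho> g = mat_trace (\<rho> g)"
  by (simp add: character_def)

lemma avg_trace:
  assumes r: "is_rep G d \<rho>" and E: "E \<in> carrier_mat d d"
  shows "mat_trace (avg G \<rho> \<rho> E d d) = of_nat (card (carrier G)) * mat_trace E"
proof -
  have "mat_trace (avg G \<rho> \<rho> E d d) = (\<Sum>i<d. \<Sum>g\<in>carrier G. (\<rho> g * E * \<rho> (inv g)) $$ (i,i))"
    by (simp add: mat_trace_def avg_def)
  also have "\<dots> = (\<Sum>g\<in>carrier G. \<Sum>i<d. (\<rho> g * E * \<rho> (inv g)) $$ (i,i))" by (rule sum.swap)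
  also have "\<dots> = (\<Sum>g\<in>carrier G. mat_trace E)"
  proof (intro sum.cong refl)
    fix g assume g: "g \<in> carrier G"
    have "(\<Sum>i<d. (\<rho> g * E * \<rho> (inv g)) $$ (i,i)) = mat_trace (\<rho> g * E * \<rho> (inv g))"
      using rep_carrier[OF r g] rep_carrier[OF r inv_closed[OF g]] E by (simp add: mat_trace_def)
    also have "\<dots> = mat_trace E"
      by (rule mat_trace_similar[OF E rep_carrier[OF r inv_closed[OF g]] rep_carrier[OF r g] rep_inv(2)[OF r g]])
    finally show "(\<Sum>i<d. (\<rho> g * E * \<rho> (inv g)) $$ (i,i)) = mat_trace E" .
  qed
  also have "\<dots> = of_nat (card (carrier G)) * mat_trace E" by simp
  finally show ?thesis .
qed

lemma avg_scalar:
  assumes irr: "is_irred_rep G d \<rho>" and E: "E \<in> carrier_mat d d"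
  shows "avg G \<rho> \<rho> E d d = (of_nat (card (carrier G)) * mat_trace E / of_nat d) \<cdot>\<^sub>m 1\<^sub>m d"
proof -
  have r: "is_rep G d \<rho>" and d0: "d > 0" using irr by (auto simp: is_irred_rep_def)
  obtain a where a: "avg G \<rho> \<rho> E d d = a \<cdot>\<^sub>m 1\<^sub>m d"
    using schur_scalar[OF irr avg_carrier avg_int[OF r r E]] by blast
  have "a * of_nat d = of_nat (card (carrier G)) * mat_trace E"
    using avg_trace[OF r E] a mat_trace_smult_one by metis
  hence "a = of_nat (card (carrier G)) * mat_trace E / of_nat d" using d0 by (simp add: field_simps)
  with a show ?thesis by simp
qed

lemma avg_zero:
  assumes irr\<rho>: "is_irred_rep G d \<rho>" and irr\<sigma>: "is_irred_rep G e \<sigma>" and E: "E \<in> carrier_mat e d"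
    and neq: "character G \<sigma> \<noteq> character G \<rho>"
  shows "avg G \<sigma> \<rho> E e d = 0\<^sub>m e d"
proof -
  have r\<rho>: "is_rep G d \<rho>" and r\<sigma>: "is_rep G e \<sigma>" using irr\<rho> irr\<sigma> by (auto simp: is_irred_rep_def)
  show ?thesis by (rule schur_zero[OF irr\<rho> irr\<sigma> avg_carrier avg_int[OF r\<sigma> r\<rho> E] neq])
qed

lemma avg_Eu_entry:
  assumes r\<sigma>: "is_rep G e \<sigma>" and r\<rho>: "is_rep G d \<rho>" and i: "i < e" and l: "l < d"
    and a: "a < e" and b: "b < d"
  shows "avg G \<sigma> \<rho> (Eu e d i l) e d $$ (a,b) = (\<Sum>g\<in>carrier G. \<sigma> g $$ (a,i) * \<rho> (inv g) $$ (l,b))"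
  using a b i l by (simp add: avg_def Eu_prod[OF rep_carrier[OF r\<sigma>] rep_carrier[OF r\<rho> inv_closed]])

lemma sum_chars_avg:
  assumes r\<sigma>: "is_rep G e \<sigma>" and r\<rho>: "is_rep G d \<rho>"
  shows "(\<Sum>g\<in>carrier G. character G \<sigma> g * character G \<rho> (inv g)) =
         (\<Sum>i<e. \<Sum>l<d. avg G \<sigma> \<rho> (Eu e d i l) e d $$ (i,l))"
proof -
  have "(\<Sum>i<e. \<Sum>l<d. avg G \<sigma> \<rho> (Eu e d i l) e d $$ (i,l)) =
        (\<Sum>i<e. \<Sum>l<d. \<Sum>g\<in>carrier G. \<sigma> g $$ (i,i) * \<rho> (inv g) $$ (l,l))"
    by (intro sum.cong refl) (simp add: avg_Eu_entry[OF r\<sigma> r\<rho>])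
  also have "\<dots> = (\<Sum>g\<in>carrier G. \<Sum>i<e. \<Sum>l<d. \<sigma> g $$ (i,i) * \<rho> (inv g) $$ (l,l))"
    by (simp add: sum.swap[of _ "carrier G"])
  also have "\<dots> = (\<Sum>g\<in>carrier G. character G \<sigma> g * character G \<rho> (inv g))"
  proof (intro sum.cong refl)
    fix g assume g: "g \<in> carrier G"
    show "(\<Sum>i<e. \<Sum>l<d. \<sigma> g $$ (i,i) * \<rho> (inv g) $$ (l,l)) = character G \<sigma> g * character G \<rho> (inv g)"
      using g rep_carrier[OF r\<sigma> g] rep_carrier[OF r\<rho> inv_closed[OF g]]
      by (simp add: char_in mat_trace_def sum_product)
  qed
  finally show ?thesis by simp
qed

lemma char_orth_same:
  assumes irr: "is_irred_rep G d \<rho>"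
  shows "(\<Sum>g\<in>carrier G. character G \<rho> g * character G \<rho> (inv g)) = of_nat (card (carrier G))"
proof -
  have r: "is_rep G d \<rho>" and d0: "d > 0" using irr by (auto simp: is_irred_rep_def)
  have "(\<Sum>g\<in>carrier G. character G \<rho> g * character G \<rho> (inv g)) =
        (\<Sum>i<d. \<Sum>l<d. avg G \<rho> \<rho> (Eu d d i l) d d $$ (i,l))" by (rule sum_chars_avg[OF r r])
  also have "\<dots> = (\<Sum>i<d. \<Sum>l<d. if l = i then of_nat (card (carrier G)) / of_nat d else 0)"
    by (intro sum.cong refl) (auto simp: avg_scalar[OF irr] mat_trace_Eu)
  also have "\<dots> = of_nat (card (carrier G))" using d0 by simp
  finally show ?thesis .
qed

lemma char_orth:
  assumes irr\<rho>: "is_irred_rep G d \<rho>" and irr\<sigma>: "is_irred_rep G e \<sigma>"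
  shows "(\<Sum>g\<in>carrier G. character G \<sigma> g * character G \<rho> (inv g)) =
         (if character G \<sigma> = character G \<rho> then of_nat (card (carrier G)) else 0)"
proof (cases "character G \<sigma> = character G \<rho>")
  case True
  then show ?thesis using char_orth_same[OF irr\<rho>] by simp
next
  case False
  have r\<rho>: "is_rep G d \<rho>" and r\<sigma>: "is_rep G e \<sigma>" using irr\<rho> irr\<sigma> by (auto simp: is_irred_rep_def)
  have "(\<Sum>g\<in>carrier G. character G \<sigma> g * character G \<rho> (inv g)) =
        (\<Sum>i<e. \<Sum>l<d. avg G \<sigma> \<rho> (Eu e d i l) e d $$ (i,l))" by (rule sum_chars_avg[OF r\<sigma> r\<rho>])
  also have "\<dots> = 0" by (intro sum.neutral ballI) (simp add: avg_zero[OF irr\<rho> irr\<sigma> Eu_carrier False])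
  finally show ?thesis using False by simp
qed

end



context fgrp
begin

lemma irr_memE:
  assumes "\<psi> \<in> irr_chars G"
  obtains d \<rho> where "is_irred_rep G d \<rho>" "\<psi> = character G \<rho>"
  using assms by (auto simp: irr_chars_def)

lemma irr_orth:
  assumes \<psi>: "\<psi> \<in> irr_chars G" and \<phi>: "\<phi> \<in> irr_chars G"
  shows "(\<Sum>g\<in>carrier G. \<phi> g * \<psi> (inv g)) = (if \<phi> = \<psi> then of_nat (card (carrier G)) else 0)"
proof -
  obtain d \<rho> where r: "is_irred_rep G d \<rho>" "\<psi> = character G \<rho>" using irr_memE[OF \<psi>] by blast
  obtain e \<sigma> where s: "is_irred_rep G e \<sigma>" "\<phi> = character G \<sigma>" using irr_memE[OF \<phi>] by blast
  show ?thesis using char_orth[OF r(1) s(1)] r(2) s(2) by simp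
qed

lemma irr_finite: "finite (irr_chars G)"
proof (rule ccontr)
  assume inf: "\<not> finite (irr_chars G)"
  define N where "N = card (carrier G)"
  have N0: "N > 0" using fin by (auto simp: N_def card_gt_0_iff)
  obtain F where F: "finite F" "card F = Suc N" "F \<subseteq> irr_chars G"
    using infinite_arbitrarily_large[OF inf] by blast
  obtain f where f: "bij_betw f {0..<Suc N} F" using ex_bij_betw_nat_finite[OF F(1)] F(2) by auto
  obtain en where en: "bij_betw en {0..<N} (carrier G)" using ex_bij_betw_nat_finite[OF fin] by (auto simp: N_def)
  have fF: "a < Suc N \<Longrightarrow> f a \<in> irr_chars G" for a using f F(3) by (auto simp: bij_betw_def)
  have finj: "a < Suc N \<Longrightarrow> a' < Suc N \<Longrightarrow> f a = f a' \<Longrightarrow> a = a'" for a a'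
    using f by (auto simp: bij_betw_def inj_on_def)
  define M where "M = mat (Suc N) (Suc N) (\<lambda>(a,b). if b < N then f a (en b) else 0)"
  define M' where "M' = mat (Suc N) (Suc N) (\<lambda>(b,a). if b < N then f a (inv (en b)) else 0)"
  have Mc: "M \<in> carrier_mat (Suc N) (Suc N)" and M'c: "M' \<in> carrier_mat (Suc N) (Suc N)"
    by (auto simp: M_def M'_def)
  have "M * M' = of_nat N \<cdot>\<^sub>m 1\<^sub>m (Suc N)"
  proof (rule eq_matI)
    fix a a' assume "a < dim_row (of_nat N \<cdot>\<^sub>m 1\<^sub>m (Suc N) :: complex mat)" "a' < dim_col (of_nat N \<cdot>\<^sub>m 1\<^sub>m (Suc N) :: complex mat)"
    hence aa: "a < Suc N" "a' < Suc N" by auto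
    have "(M * M') $$ (a,a') = (\<Sum>b<Suc N. M $$ (a,b) * M' $$ (b,a'))" using aa by (intro mm_idx[OF Mc M'c])
    also have "\<dots> = (\<Sum>b<Suc N. if b < N then f a (en b) * f a' (inv (en b)) else 0)"
      using aa by (intro sum.cong) (auto simp: M_def M'_def)
    also have "\<dots> = (\<Sum>b<N. f a (en b) * f a' (inv (en b)))" by (rule sum_pad) simp
    also have "\<dots> = (\<Sum>g\<in>carrier G. f a g * f a' (inv g))"
      using sum.reindex_bij_betw[OF en, of "\<lambda>g. f a g * f a' (inv g)"] by (simp add: atLeast0LessThan)
    also have "\<dots> = (if f a = f a' then of_nat N else 0)" using irr_orth[OF fF[OF aa(2)] fF[OF aa(1)]] by (simp add: N_def)
    also have "\<dots> = (of_nat N \<cdot>\<^sub>m 1\<^sub>m (Suc N)) $$ (a,a')" using aa finj by auto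
    finally show "(M * M') $$ (a,a') = (of_nat N \<cdot>\<^sub>m 1\<^sub>m (Suc N)) $$ (a,a')" .
  qed (auto simp: M_def M'_def)
  hence "det M * det M' = of_nat N ^ Suc N" using det_mult[OF Mc M'c] by simp
  moreover have "det M = 0" by (rule det_zero_col[OF Mc, of N]) (auto simp: M_def)
  ultimately show False using N0 by simp
qed

definition triv :: "'a \<Rightarrow> complex mat" where "triv = (\<lambda>_. 1\<^sub>m 1)"

lemma triv_irred: "is_irred_rep G 1 triv"
  unfolding is_irred_rep_def is_rep_def triv_def
proof (intro conjI allI impI ballI)
  fix W assume W: "is_subspace 1 W \<and> (\<forall>g\<in>carrier G. \<forall>w\<in>W. 1\<^sub>m 1 *\<^sub>v w \<in> W)"
  show "W = {0\<^sub>v 1} \<or> W = carrier_vec 1"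
  proof (cases "W = {0\<^sub>v 1}")
    case False
    have Wc: "W \<subseteq> carrier_vec 1" and W0: "0\<^sub>v 1 \<in> W" and Ws: "\<And>c v. v \<in> W \<Longrightarrow> c \<cdot>\<^sub>v v \<in> W"
      using W by (auto simp: is_subspace_def)
    obtain w where w: "w \<in> W" "w \<noteq> 0\<^sub>v 1" using False W0 by auto
    have w0: "w $ 0 \<noteq> 0"
    proof
      assume "w $ 0 = 0"
      hence "w = 0\<^sub>v 1" using w Wc by (intro eq_vecI) auto
      with w show False by simp
    qed
    have "carrier_vec 1 \<subseteq> W"
    proof
      fix u :: "complex vec" assume u: "u \<in> carrier_vec 1"
      have "u = (u $ 0 / w $ 0) \<cdot>\<^sub>v w" using u w Wc w0 by (intro eq_vecI) auto
      then show "u \<in> W" using Ws[OF w(1)] by metis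
    qed
    with Wc show ?thesis by auto
  qed simp
qed auto

definition trivc :: "'a \<Rightarrow> complex" where "trivc = character G triv"

lemma trivc_irr: "trivc \<in> irr_chars G"
  using triv_irred by (auto simp: irr_chars_def trivc_def)

lemma trivc_val: "g \<in> carrier G \<Longrightarrow> trivc g = 1"
  by (simp add: trivc_def character_def triv_def)

lemma irr_sum:
  assumes \<psi>: "\<psi> \<in> irr_chars G"
  shows "(\<Sum>g\<in>carrier G. \<psi> g) = (if \<psi> = trivc then of_nat (card (carrier G)) else 0)"
proof -
  have "(\<Sum>g\<in>carrier G. \<psi> g) = (\<Sum>g\<in>carrier G. \<psi> g * trivc (inv g))"
    by (intro sum.cong refl) (simp add: trivc_val)
  also have "\<dots> = (if \<psi> = trivc then of_nat (card (carrier G)) else 0)" by (rule irr_orth[OF trivc_irr \<psi>])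
  finally show ?thesis .
qed

lemma irr_deg:
  assumes \<psi>: "\<psi> \<in> irr_chars G"
  obtains d \<rho> where "is_irred_rep G d \<rho>" "\<psi> = character G \<rho>" "\<psi> \<one> = of_nat d" "chdeg G \<psi> = real d" "d > 0"
proof -
  obtain d \<rho> where r: "is_irred_rep G d \<rho>" "\<psi> = character G \<rho>" using irr_memE[OF \<psi>] by blast
  have "\<psi> \<one> = of_nat d" using r rep_one[of G d \<rho>] by (simp add: is_irred_rep_def character_def)
  moreover hence "chdeg G \<psi> = real d" by (simp add: chdeg_def)
  ultimately show ?thesis using that r by (auto simp: is_irred_rep_def)
qed

end



context fgrp
begin

lemma reg_formula:
  assumes g: "g \<in> carrier G"
  shows "(\<Sum>\<psi>\<in>irr_chars G. \<psi> \<one> * \<psi> g) = (if g = \<one> then of_nat (card (carrier G)) else 0)"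
proof -
  define N where "N = card (carrier G)"
  obtain en where en: "bij_betw en {0..<N} (carrier G)" using ex_bij_betw_nat_finite[OF fin] by (auto simp: N_def)
  have enc: "i < N \<Longrightarrow> en i \<in> carrier G" for i using en by (auto simp: bij_betw_def)
  have eninj: "i < N \<Longrightarrow> j < N \<Longrightarrow> en i = en j \<longleftrightarrow> i = j" for i j
    using en by (auto simp: bij_betw_def inj_on_def)
  have sumen: "(\<Sum>k<N. F (en k)) = (\<Sum>h\<in>carrier G. F h)" for F :: "'a \<Rightarrow> complex"
    using sum.reindex_bij_betw[OF en, of F] by (simp add: atLeast0LessThan)
  define L where "L g = mat N N (\<lambda>(i,j). if en i = g \<otimes> en j then 1 else 0 :: complex)" for g
  have Lc: "L g \<in> carrier_mat N N" for g by (simp add: L_def)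
  have rep: "is_rep G N L" unfolding is_rep_def
  proof (intro conjI ballI)
    show "L g \<in> carrier_mat N N" for g by (rule Lc)
    show "L \<one> = 1\<^sub>m N" by (rule eq_matI) (auto simp: L_def enc eninj)
    fix g h assume g: "g \<in> carrier G" and h: "h \<in> carrier G"
    show "L (g \<otimes> h) = L g * L h"
    proof (rule eq_matI)
      fix i j assume "i < dim_row (L g * L h)" "j < dim_col (L g * L h)"
      hence ij: "i < N" "j < N" by (auto simp: L_def)
      have x: "h \<otimes> en j \<in> carrier G" using h enc[OF ij(2)] by simp
      have "(L g * L h) $$ (i,j) = (\<Sum>k<N. L g $$ (i,k) * L h $$ (k,j))" using ij by (intro mm_idx[OF Lc Lc])
      also have "\<dots> = (\<Sum>k<N. (\<lambda>y. if y = h \<otimes> en j then (if en i = g \<otimes> y then 1 else 0) else 0) (en k))"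
        using ij by (intro sum.cong) (auto simp: L_def)
      also have "\<dots> = (\<Sum>y\<in>carrier G. if y = h \<otimes> en j then (if en i = g \<otimes> y then 1 else 0) else 0)"
        by (rule sumen)
      also have "\<dots> = (if en i = g \<otimes> (h \<otimes> en j) then 1 else 0)" by (subst sum.delta[OF fin]) (use x in simp)
      also have "\<dots> = L (g \<otimes> h) $$ (i,j)" using ij g h enc by (simp add: L_def m_assoc)
      finally show "L (g \<otimes> h) $$ (i,j) = (L g * L h) $$ (i,j)" by simp
    qed (auto simp: L_def)
  qed
  have chL: "character G L x = (if x = \<one> then of_nat N else 0)" if x: "x \<in> carrier G" for x
  proof -
    have "character G L x = (\<Sum>i<N. L x $$ (i,i))" using x by (simp add: character_def mat_trace_def L_def)
    also have "\<dots> = (\<Sum>i<N. (\<lambda>y. if y = x \<otimes> y then 1 else 0) (en i))" by (intro sum.cong) (auto simp: L_def)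
    also have "\<dots> = (\<Sum>y\<in>carrier G. if y = x \<otimes> y then 1 else 0)" by (rule sumen)
    also have "\<dots> = (\<Sum>y\<in>carrier G. if x = \<one> then 1 else 0)" using x by (intro sum.cong) auto
    also have "\<dots> = (if x = \<one> then of_nat N else 0)" by (simp add: N_def)
    finally show ?thesis .
  qed
  obtain c where c: "\<forall>x\<in>carrier G. character G L x = (\<Sum>\<psi>\<in>irr_chars G. c \<psi> * \<psi> x)"
    using char_decomp[OF irr_finite rep] by blast
  have cval: "c \<phi> = \<phi> \<one>" if \<phi>: "\<phi> \<in> irr_chars G" for \<phi>
  proof -
    have "(\<Sum>x\<in>carrier G. character G L x * \<phi> (inv x)) = (\<Sum>x\<in>carrier G. if x = \<one> then of_nat N * \<phi> \<one> else 0)"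
      by (intro sum.cong refl) (auto simp: chL)
    also have "\<dots> = of_nat N * \<phi> \<one>" by (subst sum.delta[OF fin]) simp
    finally have 1: "(\<Sum>x\<in>carrier G. character G L x * \<phi> (inv x)) = of_nat N * \<phi> \<one>" .
    have "(\<Sum>x\<in>carrier G. character G L x * \<phi> (inv x)) = (\<Sum>x\<in>carrier G. \<Sum>\<psi>\<in>irr_chars G. c \<psi> * (\<psi> x * \<phi> (inv x)))"
      by (intro sum.cong refl) (simp add: c sum_distrib_right sum_distrib_left ac_simps)
    also have "\<dots> = (\<Sum>\<psi>\<in>irr_chars G. c \<psi> * (\<Sum>x\<in>carrier G. \<psi> x * \<phi> (inv x)))"
      by (simp add: sum.swap[of _ "carrier G"] sum_distrib_left)
    also have "\<dots> = (\<Sum>\<psi>\<in>irr_chars G. if \<psi> = \<phi> then c \<psi> * of_nat N else 0)"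
      by (intro sum.cong refl) (simp add: irr_orth[OF \<phi>] N_def)
    also have "\<dots> = c \<phi> * of_nat N" using \<phi> irr_finite by (simp add: sum.delta')
    finally have 2: "(\<Sum>x\<in>carrier G. character G L x * \<phi> (inv x)) = c \<phi> * of_nat N" .
    have N0: "N > 0" using fin by (auto simp: N_def card_gt_0_iff)
    from 1 2 N0 show ?thesis by (simp add: mult.commute)
  qed
  have "(\<Sum>\<psi>\<in>irr_chars G. \<psi> \<one> * \<psi> g) = (\<Sum>\<psi>\<in>irr_chars G. c \<psi> * \<psi> g)"
    by (intro sum.cong refl) (simp add: cval)
  also have "\<dots> = character G L g" using c g by simp
  finally show ?thesis using chL[OF g] by (simp add: N_def)
qed

end



context fgrp
begin

lemma G1:
  assumes irr: "is_irred_rep G d \<rho>" and h: "h \<in> carrier G"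
  shows "(\<Sum>y\<in>carrier G. character G \<rho> y * character G \<rho> (inv y \<otimes> h)) =
         of_nat (card (carrier G)) / of_nat d * character G \<rho> h"
proof -
  have r: "is_rep G d \<rho>" and d0: "d > 0" using irr by (auto simp: is_irred_rep_def)
  have rc: "\<And>g. g \<in> carrier G \<Longrightarrow> \<rho> g \<in> carrier_mat d d" using rep_carrier[OF r] .
  let ?N = "of_nat (card (carrier G)) :: complex"
  have "(\<Sum>y\<in>carrier G. character G \<rho> y * character G \<rho> (inv y \<otimes> h)) =
        (\<Sum>y\<in>carrier G. (\<Sum>i<d. \<rho> y $$ (i,i)) * (\<Sum>k<d. \<Sum>l<d. \<rho> (inv y) $$ (k,l) * \<rho> h $$ (l,k)))"
  proof (intro sum.cong refl)
    fix y assume y: "y \<in> carrier G"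
    show "character G \<rho> y * character G \<rho> (inv y \<otimes> h) =
        (\<Sum>i<d. \<rho> y $$ (i,i)) * (\<Sum>k<d. \<Sum>l<d. \<rho> (inv y) $$ (k,l) * \<rho> h $$ (l,k))"
      using y h rep_mult[OF r inv_closed[OF y] h] mat_trace_prod[OF rc[OF inv_closed[OF y]] rc[OF h]]
      by (simp add: char_in mat_trace_def2[OF rc[OF y]])
  qed
  also have "\<dots> = (\<Sum>y\<in>carrier G. \<Sum>k<d. \<Sum>l<d. \<Sum>i<d. \<rho> y $$ (i,i) * (\<rho> (inv y) $$ (k,l) * \<rho> h $$ (l,k)))"
    by (simp add: sum_distrib_left sum_distrib_right mult.assoc)
  also have "\<dots> = (\<Sum>k<d. \<Sum>y\<in>carrier G. \<Sum>l<d. \<Sum>i<d. \<rho> y $$ (i,i) * (\<rho> (inv y) $$ (k,l) * \<rho> h $$ (l,k)))"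
    by (rule sum.swap)
  also have "\<dots> = (\<Sum>k<d. \<Sum>l<d. \<Sum>y\<in>carrier G. \<Sum>i<d. \<rho> y $$ (i,i) * (\<rho> (inv y) $$ (k,l) * \<rho> h $$ (l,k)))"
    by (rule sum.cong[OF refl], rule sum.swap)
  also have "\<dots> = (\<Sum>k<d. \<Sum>l<d. \<Sum>i<d. \<Sum>y\<in>carrier G. \<rho> y $$ (i,i) * (\<rho> (inv y) $$ (k,l) * \<rho> h $$ (l,k)))"
    by (rule sum.cong[OF refl], rule sum.cong[OF refl], rule sum.swap)
  also have "\<dots> = (\<Sum>k<d. \<Sum>l<d. (\<Sum>i<d. \<Sum>y\<in>carrier G. \<rho> y $$ (i,i) * \<rho> (inv y) $$ (k,l)) * \<rho> h $$ (l,k))"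
    by (simp add: sum_distrib_right mult.assoc)
  also have "\<dots> = (\<Sum>k<d. \<Sum>l<d. (if k = l then ?N / of_nat d else 0) * \<rho> h $$ (l,k))"
  proof (intro sum.cong refl)
    fix k l assume kl: "k \<in> {..<d}" "l \<in> {..<d}"
    have "(\<Sum>i<d. \<Sum>y\<in>carrier G. \<rho> y $$ (i,i) * \<rho> (inv y) $$ (k,l)) = (\<Sum>i<d. avg G \<rho> \<rho> (Eu d d i k) d d $$ (i,l))"
      using kl by (intro sum.cong refl) (simp add: avg_Eu_entry[OF r r])
    also have "\<dots> = (\<Sum>i<d. if i = k \<and> i = l then ?N / of_nat d else 0)"
      using kl by (intro sum.cong refl) (auto simp: avg_scalar[OF irr] mat_trace_Eu)
    also have "\<dots> = (if k = l then ?N / of_nat d else 0)" using kl by (auto simp: sum.delta)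
    finally show "(\<Sum>i<d. \<Sum>y\<in>carrier G. \<rho> y $$ (i,i) * \<rho> (inv y) $$ (k,l)) * \<rho> h $$ (l,k) =
      (if k = l then ?N / of_nat d else 0) * \<rho> h $$ (l,k)" by simp
  qed
  also have "\<dots> = (\<Sum>k<d. ?N / of_nat d * \<rho> h $$ (k,k))"
  proof (intro sum.cong refl)
    fix k assume k: "k \<in> {..<d}"
    have "(\<Sum>l<d. (if k = l then ?N / of_nat d else 0) * \<rho> h $$ (l,k)) =
          (\<Sum>l<d. if l = k then ?N / of_nat d * \<rho> h $$ (l,k) else 0)" by (intro sum.cong) auto
    also have "\<dots> = ?N / of_nat d * \<rho> h $$ (k,k)" using k by (simp add: sum.delta)
    finally show "(\<Sum>l<d. (if k = l then ?N / of_nat d else 0) * \<rho> h $$ (l,k)) = ?N / of_nat d * \<rho> h $$ (k,k)" .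
  qed
  also have "\<dots> = ?N / of_nat d * character G \<rho> h"
    using h by (simp add: char_in mat_trace_def2[OF rc[OF h]] sum_distrib_left)
  finally show ?thesis .
qed

end



context fgrp
begin

lemma G2:
  assumes irr: "is_irred_rep G d \<rho>" and y: "y \<in> carrier G" and z: "z \<in> carrier G"
  shows "(\<Sum>x\<in>carrier G. character G \<rho> (x \<otimes> y \<otimes> inv x \<otimes> z)) =
         of_nat (card (carrier G)) * character G \<rho> y / of_nat d * character G \<rho> z"
proof -
  have r: "is_rep G d \<rho>" and d0: "d > 0" using irr by (auto simp: is_irred_rep_def)
  have rc: "\<And>g. g \<in> carrier G \<Longrightarrow> \<rho> g \<in> carrier_mat d d" using rep_carrier[OF r] .
  define c where "c = of_nat (card (carrier G)) * character G \<rho> y / of_nat d"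
  define P where "P x = \<rho> x * \<rho> y * \<rho> (inv x)" for x
  have Pc: "x \<in> carrier G \<Longrightarrow> P x \<in> carrier_mat d d" for x
    unfolding P_def using rc y by (meson mult_carrier_mat inv_closed)
  have "(\<Sum>x\<in>carrier G. character G \<rho> (x \<otimes> y \<otimes> inv x \<otimes> z)) =
        (\<Sum>x\<in>carrier G. \<Sum>i<d. \<Sum>k<d. P x $$ (i,k) * \<rho> z $$ (k,i))"
  proof (intro sum.cong refl)
    fix x assume x: "x \<in> carrier G"
    have "\<rho> (x \<otimes> y \<otimes> inv x \<otimes> z) = P x * \<rho> z"
      using x y z by (simp add: P_def rep_mult[OF r])
    then show "character G \<rho> (x \<otimes> y \<otimes> inv x \<otimes> z) = (\<Sum>i<d. \<Sum>k<d. P x $$ (i,k) * \<rho> z $$ (k,i))"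
      using x y z mat_trace_prod[OF Pc[OF x] rc[OF z]] by (simp add: char_in)
  qed
  also have "\<dots> = (\<Sum>i<d. \<Sum>x\<in>carrier G. \<Sum>k<d. P x $$ (i,k) * \<rho> z $$ (k,i))" by (rule sum.swap)
  also have "\<dots> = (\<Sum>i<d. \<Sum>k<d. \<Sum>x\<in>carrier G. P x $$ (i,k) * \<rho> z $$ (k,i))"
    by (rule sum.cong[OF refl], rule sum.swap)
  also have "\<dots> = (\<Sum>i<d. \<Sum>k<d. avg G \<rho> \<rho> (\<rho> y) d d $$ (i,k) * \<rho> z $$ (k,i))"
    by (intro sum.cong refl) (simp add: avg_def P_def sum_distrib_right)
  also have "\<dots> = (\<Sum>i<d. \<Sum>k<d. (if k = i then c * \<rho> z $$ (k,i) else 0))"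
    by (intro sum.cong refl) (auto simp: avg_scalar[OF irr rc[OF y]] c_def char_in[OF y])
  also have "\<dots> = (\<Sum>i<d. c * \<rho> z $$ (i,i))" by (simp add: sum.delta)
  also have "\<dots> = c * character G \<rho> z" using z by (simp add: char_in mat_trace_def2[OF rc[OF z]] sum_distrib_left)
  finally show ?thesis by (simp add: c_def)
qed

lemma comm_sum:
  assumes \<psi>: "\<psi> \<in> irr_chars G" and h: "h \<in> carrier G"
  shows "(\<Sum>y\<in>carrier G. \<Sum>x\<in>carrier G. \<psi> (x \<otimes> y \<otimes> inv x \<otimes> (inv y \<otimes> h))) =
         (of_nat (card (carrier G)) / \<psi> \<one>)^2 * \<psi> h"
proof -
  obtain d \<rho> where r: "is_irred_rep G d \<rho>" "\<psi> = character G \<rho>" "\<psi> \<one> = of_nat d"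
    using irr_deg[OF \<psi>] by metis
  let ?N = "of_nat (card (carrier G)) :: complex"
  have "(\<Sum>y\<in>carrier G. \<Sum>x\<in>carrier G. \<psi> (x \<otimes> y \<otimes> inv x \<otimes> (inv y \<otimes> h))) =
        (\<Sum>y\<in>carrier G. ?N / of_nat d * (\<psi> y * \<psi> (inv y \<otimes> h)))"
    using h by (intro sum.cong refl) (simp add: r(2) G2[OF r(1)])
  also have "\<dots> = ?N / of_nat d * (\<Sum>y\<in>carrier G. \<psi> y * \<psi> (inv y \<otimes> h))" by (simp add: sum_distrib_left)
  also have "\<dots> = ?N / of_nat d * (?N / of_nat d * \<psi> h)" using G1[OF r(1) h] r(2) by simp
  finally show ?thesis using r(3) by (simp add: power2_eq_square)
qed

lemma comm_nonneg:
  assumes h: "h \<in> carrier G"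
  shows "Re (\<Sum>\<psi>\<in>irr_chars G. \<psi> h / \<psi> \<one>) \<ge> 0"
proof -
  let ?N = "of_nat (card (carrier G)) :: complex"
  define cm where "cm x y = x \<otimes> y \<otimes> inv x \<otimes> (inv y \<otimes> h)" for x y
  have cmc: "x \<in> carrier G \<Longrightarrow> y \<in> carrier G \<Longrightarrow> cm x y \<in> carrier G" for x y using h by (simp add: cm_def)
  have N0: "card (carrier G) > 0" using fin by (auto simp: card_gt_0_iff)
  have "(\<Sum>\<psi>\<in>irr_chars G. \<psi> \<one> * (\<Sum>y\<in>carrier G. \<Sum>x\<in>carrier G. \<psi> (cm x y))) =
        (\<Sum>y\<in>carrier G. \<Sum>x\<in>carrier G. \<Sum>\<psi>\<in>irr_chars G. \<psi> \<one> * \<psi> (cm x y))"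
    by (simp add: sum_distrib_left sum.swap[of _ "irr_chars G"])
  also have "\<dots> = (\<Sum>y\<in>carrier G. \<Sum>x\<in>carrier G. of_nat (if cm x y = \<one> then card (carrier G) else 0))"
    by (intro sum.cong refl) (simp add: reg_formula cmc)
  also have "\<dots> = of_nat (\<Sum>y\<in>carrier G. \<Sum>x\<in>carrier G. (if cm x y = \<one> then card (carrier G) else 0))"
    by simp
  finally have 1: "(\<Sum>\<psi>\<in>irr_chars G. \<psi> \<one> * (\<Sum>y\<in>carrier G. \<Sum>x\<in>carrier G. \<psi> (cm x y))) = of_nat (\<Sum>y\<in>carrier G. \<Sum>x\<in>carrier G. (if cm x y = \<one> then card (carrier G) else 0))" .
  have "(\<Sum>\<psi>\<in>irr_chars G. \<psi> \<one> * (\<Sum>y\<in>carrier G. \<Sum>x\<in>carrier G. \<psi> (cm x y))) =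
        (\<Sum>\<psi>\<in>irr_chars G. ?N^2 * (\<psi> h / \<psi> \<one>))"
  proof (intro sum.cong refl)
    fix \<psi> assume \<psi>: "\<psi> \<in> irr_chars G"
    obtain d \<rho> where "\<psi> \<one> = of_nat d" "d > 0" using irr_deg[OF \<psi>] by metis
    hence nz: "\<psi> \<one> \<noteq> 0" by simp
    show "\<psi> \<one> * (\<Sum>y\<in>carrier G. \<Sum>x\<in>carrier G. \<psi> (cm x y)) = ?N^2 * (\<psi> h / \<psi> \<one>)"
      using comm_sum[OF \<psi> h] nz by (simp add: cm_def power2_eq_square field_simps)
  qed
  also have "\<dots> = ?N^2 * (\<Sum>\<psi>\<in>irr_chars G. \<psi> h / \<psi> \<one>)" by (simp add: sum_distrib_left)
  finally have "?N^2 * (\<Sum>\<psi>\<in>irr_chars G. \<psi> h / \<psi> \<one>) = of_nat (\<Sum>y\<in>carrier G. \<Sum>x\<in>carrier G. (if cm x y = \<one> then card (carrier G) else 0))"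
    using 1 by simp
  hence "(\<Sum>\<psi>\<in>irr_chars G. \<psi> h / \<psi> \<one>) = of_nat (\<Sum>y\<in>carrier G. \<Sum>x\<in>carrier G. (if cm x y = \<one> then card (carrier G) else 0)) / ?N^2"
    using N0 by (simp add: field_simps)
  also have "\<dots> = of_real (real (\<Sum>y\<in>carrier G. \<Sum>x\<in>carrier G. (if cm x y = \<one> then card (carrier G) else 0)) / real (card (carrier G))^2)"
    by simp
  finally show ?thesis by (auto intro!: divide_nonneg_nonneg sum_nonneg)
qed

end



context fgrp
begin

lemma irr_one_real: "\<psi> \<in> irr_chars G \<Longrightarrow> \<psi> \<one> = complex_of_real (chdeg G \<psi>)"
  by (metis irr_deg of_real_of_nat_eq)

lemma irr_chdeg_pos: "\<psi> \<in> irr_chars G \<Longrightarrow> chdeg G \<psi> > 0"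
  by (metis irr_deg of_nat_0_less_iff)

lemma chdeg_triv: "chdeg G trivc = 1"
  by (simp add: chdeg_def trivc_val)

lemma sumF:
  "(\<Sum>g\<in>carrier G. \<Sum>\<psi>\<in>irr_chars G. \<beta> \<psi> / (chdeg G \<psi>)^2 * Re (\<psi> g)) = \<beta> trivc * real (card (carrier G))"
proof -
  have "(\<Sum>g\<in>carrier G. \<Sum>\<psi>\<in>irr_chars G. \<beta> \<psi> / (chdeg G \<psi>)^2 * Re (\<psi> g)) =
        (\<Sum>\<psi>\<in>irr_chars G. \<beta> \<psi> / (chdeg G \<psi>)^2 * Re (\<Sum>g\<in>carrier G. \<psi> g))"
    by (simp add: sum.swap[of _ "carrier G"] sum_distrib_left Re_sum)
  also have "\<dots> = (\<Sum>\<psi>\<in>irr_chars G. if \<psi> = trivc then \<beta> \<psi> / (chdeg G \<psi>)^2 * real (card (carrier G)) else 0)"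
    by (intro sum.cong refl) (simp add: irr_sum)
  also have "\<dots> = \<beta> trivc * real (card (carrier G))"
    using irr_finite trivc_irr by (simp add: sum.delta' chdeg_triv)
  finally show ?thesis .
qed

lemma sum_h:
  "(\<Sum>g\<in>carrier G. \<Sum>\<psi>\<in>irr_chars G. \<beta> \<psi> * Re (\<psi> g)) = \<beta> trivc * real (card (carrier G))"
proof -
  have "(\<Sum>g\<in>carrier G. \<Sum>\<psi>\<in>irr_chars G. \<beta> \<psi> * Re (\<psi> g)) =
        (\<Sum>\<psi>\<in>irr_chars G. \<beta> \<psi> * Re (\<Sum>g\<in>carrier G. \<psi> g))"
    by (simp add: sum.swap[of _ "carrier G"] sum_distrib_left Re_sum)
  also have "\<dots> = (\<Sum>\<psi>\<in>irr_chars G. if \<psi> = trivc then \<beta> \<psi> * real (card (carrier G)) else 0)"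
    by (intro sum.cong refl) (simp add: irr_sum)
  also have "\<dots> = \<beta> trivc * real (card (carrier G))"
    using irr_finite trivc_irr by (simp add: sum.delta')
  finally show ?thesis .
qed

lemma feasible_chdeg: "feasible G (chdeg G)"
  unfolding feasible_def
proof (intro conjI ballI)
  have "(\<Sum>\<psi>\<in>irr_chars G. \<psi> \<one> * \<psi> \<one>) = of_nat (card (carrier G))" using reg_formula[of \<one>] by simp
  hence "Re (\<Sum>\<psi>\<in>irr_chars G. \<psi> \<one> * \<psi> \<one>) = real (card (carrier G))" by simp
  moreover have "Re (\<Sum>\<psi>\<in>irr_chars G. \<psi> \<one> * \<psi> \<one>) = (\<Sum>\<psi>\<in>irr_chars G. chdeg G \<psi> * chdeg G \<psi>)"
    by (simp add: Re_sum irr_one_real cong: sum.cong)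
  ultimately show "(\<Sum>\<psi>\<in>irr_chars G. chdeg G \<psi> * chdeg G \<psi>) = real (card (carrier G))" by simp
next
  fix \<psi> assume "\<psi> \<in> irr_chars G" then show "0 \<le> chdeg G \<psi>" using irr_chdeg_pos by fastforce
next
  fix g assume g: "g \<in> carrier G"
  have "(\<Sum>\<psi>\<in>irr_chars G. chdeg G \<psi> * Re (\<psi> g)) = Re (\<Sum>\<psi>\<in>irr_chars G. \<psi> \<one> * \<psi> g)"
    by (simp add: Re_sum irr_one_real cong: sum.cong)
  also have "\<dots> = Re (if g = \<one> then of_nat (card (carrier G)) else 0)" using reg_formula[OF g] by simp
  finally show "0 \<le> (\<Sum>\<psi>\<in>irr_chars G. chdeg G \<psi> * Re (\<psi> g))" by simp
qed

lemma objective_chdeg: "objective G (chdeg G) = real (card (carrier G))"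
proof -
  have nn: "(\<Sum>\<psi>\<in>irr_chars G. chdeg G \<psi> / (chdeg G \<psi>)^2 * Re (\<psi> g)) \<ge> 0" if g: "g \<in> carrier G" for g
  proof -
    have "(\<Sum>\<psi>\<in>irr_chars G. chdeg G \<psi> / (chdeg G \<psi>)^2 * Re (\<psi> g)) = Re (\<Sum>\<psi>\<in>irr_chars G. \<psi> g / \<psi> \<one>)"
      unfolding Re_sum
    proof (intro sum.cong refl)
      fix \<psi> assume \<psi>: "\<psi> \<in> irr_chars G"
      have "chdeg G \<psi> > 0" using irr_chdeg_pos[OF \<psi>] .
      then show "chdeg G \<psi> / (chdeg G \<psi>)^2 * Re (\<psi> g) = Re (\<psi> g / \<psi> \<one>)"
        using irr_one_real[OF \<psi>] by (simp add: Re_divide_of_real power2_eq_square)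
    qed
    then show ?thesis using comm_nonneg[OF g] by simp
  qed
  have "objective G (chdeg G) = (\<Sum>g\<in>carrier G. \<Sum>\<psi>\<in>irr_chars G. chdeg G \<psi> / (chdeg G \<psi>)^2 * Re (\<psi> g))"
    unfolding objective_def L1_norm_def using nn by (intro sum.cong refl) simp
  also have "\<dots> = real (card (carrier G))" by (subst sumF) (simp add: chdeg_triv)
  finally show ?thesis .
qed

lemma objective_lower:
  assumes f: "feasible G \<alpha>"
  shows "real (card (carrier G)) \<le> objective G \<alpha>"
proof -
  have s1: "(\<Sum>\<psi>\<in>irr_chars G. \<alpha> \<psi> * chdeg G \<psi>) = real (card (carrier G))"
    and nn: "\<And>g. g \<in> carrier G \<Longrightarrow> (\<Sum>\<psi>\<in>irr_chars G. \<alpha> \<psi> * Re (\<psi> g)) \<ge> 0"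
    using f by (auto simp: feasible_def)
  have "real (card (carrier G)) = (\<Sum>\<psi>\<in>irr_chars G. \<alpha> \<psi> * Re (\<psi> \<one>))"
    using s1 by (simp add: chdeg_def)
  also have "\<dots> \<le> (\<Sum>g\<in>carrier G. \<Sum>\<psi>\<in>irr_chars G. \<alpha> \<psi> * Re (\<psi> g))"
    by (rule member_le_sum[of _ _ "\<lambda>g. \<Sum>\<psi>\<in>irr_chars G. \<alpha> \<psi> * Re (\<psi> g)"]) (use nn fin in auto)
  also have "\<dots> = \<alpha> trivc * real (card (carrier G))" by (rule sum_h)
  also have "\<dots> = (\<Sum>g\<in>carrier G. \<Sum>\<psi>\<in>irr_chars G. \<alpha> \<psi> / (chdeg G \<psi>)^2 * Re (\<psi> g))" by (rule sumF[symmetric])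
  also have "\<dots> \<le> (\<Sum>g\<in>carrier G. \<bar>\<Sum>\<psi>\<in>irr_chars G. \<alpha> \<psi> / (chdeg G \<psi>)^2 * Re (\<psi> g)\<bar>)"
    by (rule sum_mono) simp
  also have "\<dots> = objective G \<alpha>" by (simp add: objective_def L1_norm_def)
  finally show ?thesis by simp
qed

end

theorem corollary2:
  fixes G :: "('a, 'b) monoid_scheme"
  assumes "group G" and "finite (carrier G)"
  shows "feasible G (chdeg G) \<and>
         (\<forall>\<alpha>. feasible G \<alpha> \<longrightarrow> objective G (chdeg G) \<le> objective G \<alpha>)"
proof -
  interpret fgrp G by (rule fgrp.intro[OF assms(1)]) (unfold_locales, rule assms(2))
  show ?thesis using feasible_chdeg objective_chdeg objective_lower by simp
qed

end
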